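(* Let $K\in\mathcal K$, $M\in\mathbb R^{r\times p}$, $q\in[0,\theta_{K,M})$, let $Q$ be the admissible solution of the first DARE with associated $S$, $L$. Then the system $$\Theta=\left[\begin{array}{c|c}A-KC&B-KD\\\hline\sqrt q(\Phi-MC)&\sqrt q(\Psi-MD)\\-S^{-1/2}L&S^{-1/2}\end{array}\right]$$ is inner, i.e. $\widehat\Theta(\omega)^*\widehat\Theta(\omega)=I_m$ for all $\omega\in[-\pi,\pi]$. Consequently, under the noise generation scenario $W=G_{K,S,L}V$, the estimation error $\widetilde z_k=z_k-\widehat z_k$ of the estimator $E_{K,M}$ satisfies $$q\,\mathbf E|\widetilde z_0|^2+m=\mathbf E|w_0|^2=\mathrm{Tr}(LPL^T+S),$$ where $P=\mathrm{cov}(\widetilde x_0)$ is the stationary state covariance of $G_{K,S,L}$.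
   Context: Plant: $x_{k+1}=Ax_k+Bw_k$, $y_k=Cx_k+Dw_k$, $z_k=\Phi x_k+\Psi w_k$ ($x_k\in\mathbb R^n$, $w_k\in\mathbb R^m$, $y_k\in\mathbb R^p$, $z_k\in\mathbb R^r$), $\rho(A)<1$, $D$ of full row rank. $V$ is an $m$-dimensional Gaussian white noise sequence (independent, zero mean, identity covariance). Notation: $[\,\alpha\mid\beta;\gamma\mid\delta\,]$ denotes the LDTI system $s_{k+1}=\alpha s_k+\beta u_k$, output $\gamma s_k+\delta u_k$, with transfer function evaluated on the unit circle as $\widehat\Theta(\omega)=\delta+\gamma e^{i\omega}(I-e^{i\omega}\alpha)^{-1}\beta$. $\mathcal K=\{K:\rho(A-KC)<1\}$; $\mathcal L_K=\{L:\rho(A-KC+(B-KD)L)<1\}$. $E_{K,M}$: $\widehat x_{k+1}=(A-KC)\widehat x_k+Ky_k$, $\widehat z_k=(\Phi-MC)\widehat x_k+My_k$; its error operator $\Delta_{K,M}=[\,A-KC\mid B-KD;\ \Phi-MC\mid\Psi-MD\,]$ with state $\widetilde x_k=x_k-\widehat x_k$; $\theta_{K,M}=\|\Delta_{K,M}\|_\infty^{-2}$. $G_{K,S,L}=[\,A-KC+(B-KD)L\mid(B-KD)\sqrt S;\ L\mid\sqrt S\,]$, i.e. $w_k=L\widetilde x_k+\sqrt S v_k$. First DARE: $Q=(A-KC)^TQ(A-KC)+q(\Phi-MC)^T(\Phi-MC)+L^TS^{-1}L$ with $S:=(I_m-(B-KD)^TQ(B-KD)-q(\Psi-MD)^T(\Psi-MD))^{-1}$,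 $L:=S((B-KD)^TQ(A-KC)+q(\Psi-MD)^T(\Phi-MC))$; admissible means $Q$ symmetric positive semidefinite, $S$ symmetric positive definite, $L\in\mathcal L_K$ (it exists uniquely for $q\in[0,\theta_{K,M})$). *)

theory Defs
  imports "HOL-Analysis.Analysis" "HOL-Probability.Probability"
begin

definition cmat :: "real^'n^'m \<Rightarrow> complex^'n^'m" where
  "cmat A = (\<chi> i j. complex_of_real (A $ i $ j))"

definition ctranspose :: "complex^'n^'m \<Rightarrow> complex^'m^'n" where
  "ctranspose A = (\<chi> i j. cnj (A $ j $ i))"

definition spec_rad :: "real^'n^'n \<Rightarrow> real" where
  "spec_rad A = Max {cmod l | l. det (mat l - cmat A) = 0}"

definition sym_mat :: "real^'n^'n \<Rightarrow> bool" where
  "sym_mat A \<longleftrightarrow> transpose A = A"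

definition psd :: "real^'n^'n \<Rightarrow> bool" where
  "psd A \<longleftrightarrow> sym_mat A \<and> (\<forall>x. 0 \<le> x \<bullet> (A *v x))"

definition pd :: "real^'n^'n \<Rightarrow> bool" where
  "pd A \<longleftrightarrow> sym_mat A \<and> (\<forall>x. x \<noteq> 0 \<longrightarrow> 0 < x \<bullet> (A *v x))"

definition msqrt :: "real^'n^'n \<Rightarrow> real^'n^'n" where
  "msqrt S = (THE R. psd R \<and> R ** R = S)"

definition msqrt_inv :: "real^'n^'n \<Rightarrow> real^'n^'n" where
  "msqrt_inv S = matrix_inv (msqrt S)"

definition tf :: "real^'s^'s \<Rightarrow> real^'u^'s \<Rightarrow> real^'s^'o \<Rightarrow> real^'u^'o \<Rightarrow> real \<Rightarrow> complex^'u^'o" where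
  "tf \<alpha> \<beta> \<gamma> \<delta> \<omega> =
     cmat \<delta> + cmat \<gamma> ** mat (exp (\<i> * complex_of_real \<omega>))
       ** matrix_inv (mat 1 - mat (exp (\<i> * complex_of_real \<omega>)) ** cmat \<alpha>) ** cmat \<beta>"

definition inner_sys :: "real^'s^'s \<Rightarrow> real^'u^'s \<Rightarrow> real^'s^'o \<Rightarrow> real^'u^'o \<Rightarrow> bool" where
  "inner_sys \<alpha> \<beta> \<gamma> \<delta> \<longleftrightarrow>
     (\<forall>\<omega>\<in>{-pi..pi}. ctranspose (tf \<alpha> \<beta> \<gamma> \<delta> \<omega>) ** tf \<alpha> \<beta> \<gamma> \<delta> \<omega> = mat 1)"

definition hinf_norm :: "real^'s^'s \<Rightarrow> real^'u^'s \<Rightarrow> real^'s^'o \<Rightarrow> real^'u^'o \<Rightarrow> real" where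
  "hinf_norm \<alpha> \<beta> \<gamma> \<delta> = (SUP \<omega>\<in>{-pi..pi}. onorm (\<lambda>x. tf \<alpha> \<beta> \<gamma> \<delta> \<omega> *v x))"

definition Kset :: "real^'n^'n \<Rightarrow> real^'n^'p \<Rightarrow> (real^'p^'n) set" where
  "Kset A C = {K. spec_rad (A - K ** C) < 1}"

definition Lset :: "real^'n^'n \<Rightarrow> real^'m^'n \<Rightarrow> real^'n^'p \<Rightarrow> real^'m^'p \<Rightarrow> real^'p^'n \<Rightarrow> (real^'n^'m) set" where
  "Lset A B C D K = {L. spec_rad (A - K ** C + (B - K ** D) ** L) < 1}"

definition theta :: "real^'n^'n \<Rightarrow> real^'m^'n \<Rightarrow> real^'n^'p \<Rightarrow> real^'m^'p \<Rightarrow> real^'n^'r \<Rightarrow> real^'m^'r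
     \<Rightarrow> real^'p^'n \<Rightarrow> real^'p^'r \<Rightarrow> ereal" where
  "theta A B C D \<Phi> \<Psi> K M =
     (let h = hinf_norm (A - K ** C) (B - K ** D) (\<Phi> - M ** C) (\<Psi> - M ** D)
      in if h = 0 then \<infinity> else ereal (1 / h\<^sup>2))"

definition Sinv_of :: "real^'m^'n \<Rightarrow> real^'m^'p \<Rightarrow> real^'m^'r \<Rightarrow> real^'p^'n \<Rightarrow> real^'p^'r
     \<Rightarrow> real \<Rightarrow> real^'n^'n \<Rightarrow> real^'m^'m" where
  "Sinv_of B D \<Psi> K M q Q =
     mat 1 - transpose (B - K ** D) ** Q ** (B - K ** D) - q *\<^sub>R (transpose (\<Psi> - M ** D) ** (\<Psi> - M ** D))"

definition S_of :: "real^'m^'n \<Rightarrow> real^'m^'p \<Rightarrow> real^'m^'r \<Rightarrow> real^'p^'n \<Rightarrow> real^'p^'r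
     \<Rightarrow> real \<Rightarrow> real^'n^'n \<Rightarrow> real^'m^'m" where
  "S_of B D \<Psi> K M q Q = matrix_inv (Sinv_of B D \<Psi> K M q Q)"

definition L_of :: "real^'n^'n \<Rightarrow> real^'m^'n \<Rightarrow> real^'n^'p \<Rightarrow> real^'m^'p \<Rightarrow> real^'n^'r \<Rightarrow> real^'m^'r
     \<Rightarrow> real^'p^'n \<Rightarrow> real^'p^'r \<Rightarrow> real \<Rightarrow> real^'n^'n \<Rightarrow> real^'n^'m" where
  "L_of A B C D \<Phi> \<Psi> K M q Q =
     S_of B D \<Psi> K M q Q ** (transpose (B - K ** D) ** Q ** (A - K ** C)
        + q *\<^sub>R (transpose (\<Psi> - M ** D) ** (\<Phi> - M ** C)))"

definition admissible_DARE1 :: "real^'n^'n \<Rightarrow> real^'m^'n \<Rightarrow> real^'n^'p \<Rightarrow> real^'m^'p \<Rightarrow> real^'n^'r \<Rightarrow> real^'m^'r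
     \<Rightarrow> real^'p^'n \<Rightarrow> real^'p^'r \<Rightarrow> real \<Rightarrow> real^'n^'n \<Rightarrow> bool" where
  "admissible_DARE1 A B C D \<Phi> \<Psi> K M q Q \<longleftrightarrow>
     (let S = S_of B D \<Psi> K M q Q; L = L_of A B C D \<Phi> \<Psi> K M q Q in
      invertible (Sinv_of B D \<Psi> K M q Q) \<and>
      Q = transpose (A - K ** C) ** Q ** (A - K ** C) + q *\<^sub>R (transpose (\<Phi> - M ** C) ** (\<Phi> - M ** C))
          + transpose L ** Sinv_of B D \<Psi> K M q Q ** L \<and>
      psd Q \<and> pd S \<and> L \<in> Lset A B C D K)"

definition cov_mat :: "'a measure \<Rightarrow> ('a \<Rightarrow> real^'n) \<Rightarrow> real^'n^'n" where
  "cov_mat Pr X = (\<chi> i j. integral\<^sup>L Pr (\<lambda>\<omega>. (X \<omega> $ i - integral\<^sup>L Pr (\<lambda>\<omega>'. X \<omega>' $ i))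
                                        * (X \<omega> $ j - integral\<^sup>L Pr (\<lambda>\<omega>'. X \<omega>' $ j))))"

end

theory Submission
  imports Defs "HOL-Computational_Algebra.Polynomial"
begin

lemma sym_dot:
  fixes S :: "real^'n^'n"
  assumes "transpose S = S"
  shows "(S *v x) \<bullet> y = x \<bullet> (S *v y)"
proof -
  have e: "S$i$j = S$j$i" for i j
  proof -
    have "(transpose S)$j$i = S$j$i" using assms by simp
    thus ?thesis by (simp add: transpose_def)
  qed
  have "(S *v x) \<bullet> y = (\<Sum>i\<in>UNIV. \<Sum>j\<in>UNIV. S$i$j * x$j * y$i)"
    by (simp add: inner_vec_def matrix_vector_mult_def sum_distrib_right)
  also have "\<dots> = (\<Sum>j\<in>UNIV. \<Sum>i\<in>UNIV. S$i$j * x$j * y$i)"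
    by (rule sum.swap)
  also have "\<dots> = (\<Sum>j\<in>UNIV. x$j * (\<Sum>i\<in>UNIV. S$j$i * y$i))"
    by (simp add: sum_distrib_left e mult_ac)
  also have "\<dots> = x \<bullet> (S *v y)"
    by (simp add: inner_vec_def matrix_vector_mult_def)
  finally show ?thesis .
qed

lemma quad_le0_lin0:
  fixes a b :: real
  assumes "\<And>t. a * t + b * t\<^sup>2 \<le> 0"
  shows "a = 0"
proof (rule ccontr)
  assume a: "a \<noteq> 0"
  define c where "c = \<bar>b\<bar> + 1"
  define t where "t = a / c"
  have pos: "c > 0" unfolding c_def by simp
  have eq: "a * t + b * t\<^sup>2 = a\<^sup>2 / c * (1 + b / c)"
    unfolding t_def using pos by (simp add: field_simps power2_eq_square)
  have "-c < b" unfolding c_def by linarith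
  hence "-1 < b / c" using pos by (simp add: less_divide_eq)
  hence "1 + b / c > 0" by simp
  moreover have "a\<^sup>2 / c > 0" using a pos by simp
  ultimately have "a * t + b * t\<^sup>2 > 0" unfolding eq by (rule mult_pos_pos[rotated])
  with assms[of t] show False by simp
qed

lemma eigvec_exists:
  fixes S :: "real^'n^'n"
  assumes sym: "transpose S = S" and V: "subspace V" and ne: "V \<noteq> {0}"
    and inv: "\<And>x. x \<in> V \<Longrightarrow> S *v x \<in> V"
  shows "\<exists>u\<in>V. norm u = 1 \<and> S *v u = (u \<bullet> (S *v u)) *\<^sub>R u"
proof -
  define K where "K = V \<inter> sphere 0 1"
  have "compact (sphere (0::real^'n) 1 \<inter> V)"
    by (rule compact_Int_closed) (auto simp: V closed_subspace)
  hence cK: "compact K" unfolding K_def by (simp add: Int_commute)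
  obtain x where x: "x \<in> V" "x \<noteq> 0" using ne V subspace_0 by blast
  have "x /\<^sub>R norm x \<in> K" using x V unfolding K_def by (simp add: subspace_scale)
  hence neK: "K \<noteq> {}" by blast
  define f where "f = (\<lambda>y::real^'n. y \<bullet> (S *v y))"
  have cf: "continuous_on K f" unfolding f_def
    by (intro continuous_intros linear_continuous_on matrix_vector_mul_linear)
  obtain u where u: "u \<in> K" "\<And>y. y \<in> K \<Longrightarrow> f y \<le> f u"
    using continuous_attains_sup[OF cK neK cf] by blast
  have uV: "u \<in> V" and nu: "norm u = 1" using u(1) by (auto simp: K_def)
  have key: "w \<bullet> (S *v u) = 0" if w: "w \<in> V" "w \<bullet> u = 0" for w
  proof -
    have "(2 * (w \<bullet> (S *v u))) * t + (f w - f u * (norm w)\<^sup>2) * t\<^sup>2 \<le> 0" for t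
    proof -
      have "(norm (u + t *\<^sub>R w))\<^sup>2 = (u + t *\<^sub>R w) \<bullet> (u + t *\<^sub>R w)"
        by (simp add: dot_square_norm)
      also have "\<dots> = u \<bullet> u + t\<^sup>2 * (w \<bullet> w)"
        using w(2) by (simp add: inner_add_left inner_add_right inner_commute power2_eq_square)
      finally have n2: "(norm (u + t *\<^sub>R w))\<^sup>2 = 1 + t\<^sup>2 * (norm w)\<^sup>2"
        using nu by (simp add: dot_square_norm)
      have "1 + t\<^sup>2 * (norm w)\<^sup>2 > 0" by (simp add: add_pos_nonneg)
      hence nz: "norm (u + t *\<^sub>R w) \<noteq> 0" using n2 by auto
      have "(u + t *\<^sub>R w) /\<^sub>R norm (u + t *\<^sub>R w) \<in> K"
        using nz uV w V unfolding K_def by (simp add: subspace_add subspace_scale)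
      hence "f ((u + t *\<^sub>R w) /\<^sub>R norm (u + t *\<^sub>R w)) \<le> f u" by (rule u(2))
      moreover have "f ((u + t *\<^sub>R w) /\<^sub>R norm (u + t *\<^sub>R w)) = f (u + t *\<^sub>R w) / (norm (u + t *\<^sub>R w))\<^sup>2"
        unfolding f_def by (simp add: matrix_vector_mult_scaleR power2_eq_square divide_inverse inverse_mult_distrib mult_ac)
      ultimately have le0: "f (u + t *\<^sub>R w) / (1 + t\<^sup>2 * (norm w)\<^sup>2) \<le> f u"
        unfolding n2 by simp
      have le: "f (u + t *\<^sub>R w) \<le> f u * (1 + t\<^sup>2 * (norm w)\<^sup>2)"
        using le0 \<open>1 + t\<^sup>2 * (norm w)\<^sup>2 > 0\<close> by (simp add: divide_le_eq)
      have "f (u + t *\<^sub>R w) = f u + 2 * t * (w \<bullet> (S *v u)) + t\<^sup>2 * f w"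
        unfolding f_def using sym_dot[OF sym, of w u]
        by (simp add: matrix_vector_right_distrib matrix_vector_mult_scaleR inner_add_left inner_add_right
            inner_commute power2_eq_square algebra_simps)
      with le show ?thesis by (simp add: algebra_simps)
    qed
    from quad_le0_lin0[OF this] show ?thesis by simp
  qed
  define r where "r = S *v u - (u \<bullet> (S *v u)) *\<^sub>R u"
  have rV: "r \<in> V" unfolding r_def using inv uV V by (simp add: subspace_diff subspace_scale)
  have "u \<bullet> r = 0" unfolding r_def using nu
    by (simp add: inner_diff_right dot_square_norm)
  hence ru: "r \<bullet> u = 0" by (simp add: inner_commute)
  have "r \<bullet> r = r \<bullet> (S *v u) - (u \<bullet> (S *v u)) * (r \<bullet> u)"
    unfolding r_def by (simp add: inner_diff_right)
  also have "\<dots> = 0" using key[OF rV ru] ru by simp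
  finally have "r = 0" by simp
  thus ?thesis using uV nu unfolding r_def by auto
qed

lemma spectral_sub:
  fixes S :: "real^'n^'n"
  assumes sym: "transpose S = S"
  shows "subspace V \<Longrightarrow> (\<And>x. x \<in> V \<Longrightarrow> S *v x \<in> V) \<Longrightarrow>
    \<exists>B. finite B \<and> B \<subseteq> V \<and> pairwise orthogonal B \<and>
        (\<forall>b\<in>B. norm b = 1 \<and> S *v b = (b \<bullet> (S *v b)) *\<^sub>R b) \<and> span B = V"
proof (induction "dim V" arbitrary: V rule: less_induct)
  case less
  show ?case
  proof (cases "V = {0}")
    case True
    thus ?thesis by (intro exI[of _ "{}"]) auto
  next
    case False
    obtain u where u: "u \<in> V" "norm u = 1" "S *v u = (u \<bullet> (S *v u)) *\<^sub>R u"
      using eigvec_exists[OF sym less.prems(1) False less.prems(2)] by blast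
    define V' where "V' = {x \<in> V. u \<bullet> x = 0}"
    have sV': "subspace V'"
      using less.prems(1) unfolding V'_def subspace_def
      by (auto simp: inner_add_right)
    have V'V: "V' \<subseteq> V" unfolding V'_def by auto
    have uu: "u \<bullet> u = 1" using u(2) by (simp add: dot_square_norm)
    have "u \<notin> V'" using uu unfolding V'_def by auto
    hence "V' \<subset> V" using V'V u(1) by blast
    hence "span V' \<subset> span V"
      using sV' less.prems(1) by (simp add: span_eq_iff[THEN iffD2])
    hence dlt: "dim V' < dim V" by (rule dim_psubset)
    have inv': "S *v x \<in> V'" if "x \<in> V'" for x
    proof -
      have "u \<bullet> (S *v x) = (S *v u) \<bullet> x" using sym_dot[OF sym, of u x] by simp
      also have "\<dots> = (u \<bullet> (S *v u)) * (u \<bullet> x)" by (subst u(3)) simp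
      also have "\<dots> = 0" using that unfolding V'_def by simp
      finally show ?thesis using that less.prems(2) unfolding V'_def by auto
    qed
    obtain B' where B': "finite B'" "B' \<subseteq> V'" "pairwise orthogonal B'"
      "\<forall>b\<in>B'. norm b = 1 \<and> S *v b = (b \<bullet> (S *v b)) *\<^sub>R b" "span B' = V'"
      using less.hyps[OF dlt sV' inv'] by blast
    have orth: "orthogonal u b" if "b \<in> B'" for b
      using that B'(2) unfolding V'_def orthogonal_def by auto
    show ?thesis
    proof (intro exI[of _ "insert u B'"] conjI)
      show "finite (insert u B')" using B'(1) by simp
      show "insert u B' \<subseteq> V" using B'(2) V'V u(1) by auto
      show "pairwise orthogonal (insert u B')"
        using B'(3) orth unfolding pairwise_def by (auto simp: orthogonal_commute)
      show "\<forall>b\<in>insert u B'. norm b = 1 \<and> S *v b = (b \<bullet> (S *v b)) *\<^sub>R b"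
        using B'(4) u by auto
      show "span (insert u B') = V"
      proof
        show "span (insert u B') \<subseteq> V"
          using B'(2) V'V u(1) less.prems(1) by (intro span_minimal) auto
        show "V \<subseteq> span (insert u B')"
        proof
          fix x assume x: "x \<in> V"
          have "x - (u \<bullet> x) *\<^sub>R u \<in> V'"
            using x u(1) less.prems(1) uu unfolding V'_def
            by (auto simp: subspace_diff subspace_scale inner_diff_right)
          hence "x - (u \<bullet> x) *\<^sub>R u \<in> span (insert u B')"
            using B'(5) span_mono[of B' "insert u B'"] by auto
          moreover have "(u \<bullet> x) *\<^sub>R u \<in> span (insert u B')"
            by (intro span_mul span_base) auto
          ultimately have "(x - (u \<bullet> x) *\<^sub>R u) + (u \<bullet> x) *\<^sub>R u \<in> span (insert u B')"
            by (rule span_add)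
          thus "x \<in> span (insert u B')" by simp
        qed
      qed
    qed
  qed
qed

lemma onb_coeff:
  fixes B :: "(real^'n) set"
  assumes "finite B" "pairwise orthogonal B" "\<forall>b\<in>B. norm b = 1" "c \<in> B"
  shows "c \<bullet> (\<Sum>b\<in>B. g b *\<^sub>R b) = g c"
proof -
  have "c \<bullet> (\<Sum>b\<in>B. g b *\<^sub>R b) = (\<Sum>b\<in>B. g b * (c \<bullet> b))"
    by (simp add: inner_sum_right)
  also have "\<dots> = (\<Sum>b\<in>{c}. g b * (c \<bullet> b))"
    using assms(1,2,4) by (intro sum.mono_neutral_right) (auto simp: pairwise_def orthogonal_def)
  also have "\<dots> = g c" using assms(3,4) by (simp add: dot_square_norm)
  finally show ?thesis .
qed

lemma onb_expand:
  fixes B :: "(real^'n) set"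
  assumes "finite B" "pairwise orthogonal B" "\<forall>b\<in>B. norm b = 1" "span B = UNIV"
  shows "x = (\<Sum>b\<in>B. (b \<bullet> x) *\<^sub>R b)"
proof -
  define y where "y = x - (\<Sum>b\<in>B. (b \<bullet> x) *\<^sub>R b)"
  have oc: "orthogonal y c" if "c \<in> B" for c
  proof -
    have "c \<bullet> y = 0"
      using onb_coeff[OF assms(1-3) that, of "\<lambda>b. b \<bullet> x"] unfolding y_def
      by (simp add: inner_diff_right)
    thus ?thesis unfolding orthogonal_def by (simp add: inner_commute)
  qed
  have "y \<in> span B" using assms(4) by simp
  from orthogonal_to_span[OF this oc] have "orthogonal y y" .
  hence "y = 0" by (simp add: orthogonal_def)
  thus ?thesis unfolding y_def by simp
qed

definition outer_sum :: "(real^'n) set \<Rightarrow> (real^'n \<Rightarrow> real) \<Rightarrow> real^'n^'n" where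
  "outer_sum B c = (\<chi> i j. \<Sum>b\<in>B. c b * b$i * b$j)"

lemma outer_sum_mv: "outer_sum B c *v x = (\<Sum>b\<in>B. (c b * (b \<bullet> x)) *\<^sub>R b)"
proof -
  have "(outer_sum B c *v x) $ i = (\<Sum>b\<in>B. (c b * (b \<bullet> x)) *\<^sub>R b) $ i" for i
  proof -
    have "(outer_sum B c *v x) $ i = (\<Sum>j\<in>UNIV. \<Sum>b\<in>B. c b * b$i * b$j * x$j)"
      by (simp add: outer_sum_def matrix_vector_mult_def sum_distrib_right)
    also have "\<dots> = (\<Sum>b\<in>B. \<Sum>j\<in>UNIV. c b * b$i * b$j * x$j)" by (rule sum.swap)
    also have "\<dots> = (\<Sum>b\<in>B. (c b * (b \<bullet> x)) * b $ i)"
      by (simp add: inner_vec_def sum_distrib_left mult_ac)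
    also have "\<dots> = (\<Sum>b\<in>B. (c b * (b \<bullet> x)) *\<^sub>R b) $ i" by (simp add: sum_component)
    finally show ?thesis .
  qed
  thus ?thesis by (simp add: vec_eq_iff)
qed

lemma outer_sum_sym: "transpose (outer_sum B c) = outer_sum B c"
  by (simp add: outer_sum_def transpose_def mult_ac)

lemma psd_sqrt_exists:
  fixes S :: "real^'n^'n"
  assumes "psd S"
  shows "\<exists>R. psd R \<and> R ** R = S"
proof -
  have sym: "transpose S = S" using assms by (simp add: psd_def sym_mat_def)
  obtain B where B: "finite B" "pairwise orthogonal B"
      "\<forall>b\<in>B. norm b = 1 \<and> S *v b = (b \<bullet> (S *v b)) *\<^sub>R b" "span B = UNIV"
    using spectral_sub[OF sym, of UNIV] by auto
  have Bn: "\<forall>b\<in>B. norm b = 1" using B(3) by auto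
  define ev where "ev b = b \<bullet> (S *v b)" for b
  have evp: "ev b \<ge> 0" for b using assms by (simp add: psd_def ev_def)
  define R where "R = outer_sum B (\<lambda>b. sqrt (ev b))"
  have Rx: "R *v x = (\<Sum>b\<in>B. (sqrt (ev b) * (b \<bullet> x)) *\<^sub>R b)" for x
    unfolding R_def by (rule outer_sum_mv)
  have psdR: "psd R"
    unfolding psd_def sym_mat_def
  proof (intro conjI allI)
    show "transpose R = R" unfolding R_def by (rule outer_sum_sym)
    fix x :: "real^'n"
    have "x \<bullet> (R *v x) = (\<Sum>b\<in>B. sqrt (ev b) * (b \<bullet> x) * (x \<bullet> b))"
      by (simp add: Rx inner_sum_right)
    also have "\<dots> \<ge> 0" using evp
      by (intro sum_nonneg) (metis inner_commute mult.assoc mult_nonneg_nonneg real_sqrt_ge_zero zero_le_square)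
    finally show "0 \<le> x \<bullet> (R *v x)" .
  qed
  have "(R ** R) *v x = S *v x" for x
  proof -
    have "(R ** R) *v x = R *v (R *v x)" by (simp add: matrix_vector_mul_assoc)
    also have "\<dots> = (\<Sum>b\<in>B. (sqrt (ev b) * (b \<bullet> (R *v x))) *\<^sub>R b)" by (rule Rx)
    also have "\<dots> = (\<Sum>b\<in>B. (ev b * (b \<bullet> x)) *\<^sub>R b)"
    proof (rule sum.cong[OF refl])
      fix b assume b: "b \<in> B"
      have "b \<bullet> (R *v x) = sqrt (ev b) * (b \<bullet> x)"
        unfolding Rx by (rule onb_coeff[OF B(1,2) Bn b])
      thus "(sqrt (ev b) * (b \<bullet> (R *v x))) *\<^sub>R b = (ev b * (b \<bullet> x)) *\<^sub>R b"
        using evp[of b] by (simp add: mult.assoc[symmetric])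
    qed
    also have "\<dots> = (\<Sum>b\<in>B. (b \<bullet> x) *\<^sub>R (S *v b))"
    proof (rule sum.cong[OF refl])
      fix b assume "b \<in> B"
      hence e: "S *v b = ev b *\<^sub>R b" using B(3) unfolding ev_def by auto
      show "(ev b * (b \<bullet> x)) *\<^sub>R b = (b \<bullet> x) *\<^sub>R (S *v b)" unfolding e by simp
    qed
    also have "\<dots> = S *v (\<Sum>b\<in>B. (b \<bullet> x) *\<^sub>R b)"
      by (simp add: vec.sum matrix_vector_mult_scaleR)
    also have "\<dots> = S *v x" using onb_expand[OF B(1,2) Bn B(4), of x] by simp
    finally show ?thesis .
  qed
  hence "R ** R = S" by (simp add: matrix_eq)
  with psdR show ?thesis by blast
qed

lemma psd_sym: "psd R \<Longrightarrow> transpose R = R"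
  by (simp add: psd_def sym_mat_def)

lemma psd_zero:
  fixes R :: "real^'n^'n"
  assumes R: "psd R" and x: "x \<bullet> (R *v x) = 0"
  shows "R *v x = 0"
proof -
  have sym: "transpose R = R" using R by (rule psd_sym)
  have yz: "y \<bullet> (R *v x) = 0" for y
  proof -
    have "(-2 * (y \<bullet> (R *v x))) * t + (- (y \<bullet> (R *v y))) * t\<^sup>2 \<le> 0" for t
    proof -
      have "0 \<le> (x + t *\<^sub>R y) \<bullet> (R *v (x + t *\<^sub>R y))" using R by (simp add: psd_def)
      also have "\<dots> = x \<bullet> (R *v x) + 2 * t * (y \<bullet> (R *v x)) + t\<^sup>2 * (y \<bullet> (R *v y))"
        using sym_dot[OF sym, of y x]
        by (simp add: matrix_vector_right_distrib matrix_vector_mult_scaleR inner_add_left inner_add_right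
            inner_commute power2_eq_square algebra_simps)
      finally show ?thesis using x by (simp add: algebra_simps)
    qed
    from quad_le0_lin0[OF this] show ?thesis by simp
  qed
  from yz[of "R *v x"] show ?thesis by simp
qed

lemma transpose_sub: "transpose (A - B) = transpose A - transpose (B::'a::ab_group_add^'n^'m)"
  by (simp add: transpose_def vec_eq_iff)
lemma transpose_add: "transpose (A + B) = transpose A + transpose (B::'a::ab_group_add^'n^'m)"
  by (simp add: transpose_def vec_eq_iff)
lemma transpose_scaleR: "transpose (c *\<^sub>R A) = c *\<^sub>R transpose (A::real^'n^'m)"
  by (simp add: transpose_def vec_eq_iff)
lemma transpose_uminus: "transpose (- A) = - transpose (A::'a::ab_group_add^'n^'m)"
  by (simp add: transpose_def vec_eq_iff)

lemma matrix_sub_ldistrib: "(A::'a::ring_1^'n^'m) ** (B - C) = A ** B - A ** C"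
  by (simp add: vec_eq_iff matrix_matrix_mult_def sum_subtractf algebra_simps)
lemma matrix_sub_rdistrib: "((B::'a::ring_1^'n^'m) - C) ** A = B ** A - C ** A"
  by (simp add: vec_eq_iff matrix_matrix_mult_def sum_subtractf algebra_simps)
lemma matrix_add_rdistrib': "((B::'a::ring_1^'n^'m) + C) ** A = B ** A + C ** A"
  by (simp add: vec_eq_iff matrix_matrix_mult_def sum.distrib algebra_simps)

lemma diag_axis: "(M::real^'n^'n) $ i $ i = axis i 1 \<bullet> (M *v axis i 1)"
proof -
  have "(M *v axis i 1) $ i = (\<Sum>j\<in>UNIV. if j = i then M $ i $ j else 0)"
    by (simp add: matrix_vector_mult_def axis_def if_distrib cong: if_cong)
  also have "\<dots> = M $ i $ i" by simp
  finally have "(M *v axis i 1) $ i = M $ i $ i" .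
  thus ?thesis by (simp add: cart_eq_inner_axis inner_commute)
qed

lemma trace_DRD:
  fixes D R :: "real^'n^'n"
  assumes symD: "transpose D = D"
  shows "trace (D ** R ** D) = (\<Sum>i\<in>UNIV. (D *v axis i 1) \<bullet> (R *v (D *v axis i 1)))"
  unfolding trace_def
proof (rule sum.cong[OF refl])
  fix i
  have "(D ** R ** D) $ i $ i = axis i 1 \<bullet> (D *v (R *v (D *v axis i 1)))"
    by (simp add: diag_axis matrix_vector_mul_assoc[symmetric] matrix_mul_assoc)
  also have "\<dots> = (D *v axis i 1) \<bullet> (R *v (D *v axis i 1))"
    using sym_dot[OF symD, of "axis i 1"] by simp
  finally show "(D ** R ** D) $ i $ i = (D *v axis i 1) \<bullet> (R *v (D *v axis i 1))" .
qed

lemma psd_sqrt_unique: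
  fixes R1 R2 :: "real^'n^'n"
  assumes p1: "psd R1" and p2: "psd R2" and eq: "R1 ** R1 = R2 ** R2"
  shows "R1 = R2"
proof -
  define D where "D = R1 - R2"
  have s1: "transpose R1 = R1" and s2: "transpose R2 = R2" using p1 p2 by (auto intro: psd_sym)
  have symD: "transpose D = D" unfolding D_def using s1 s2 by (simp add: transpose_sub)
  have "R1 ** D + D ** R2 = R1 ** R1 - R2 ** R2"
    unfolding D_def by (simp add: matrix_sub_ldistrib matrix_sub_rdistrib)
  hence z: "R1 ** D + D ** R2 = 0" using eq by simp
  have "trace (D ** R1 ** D) + trace (D ** R2 ** D) = trace (D ** (R1 ** D + D ** R2))"
  proof -
    have "trace (D ** R2 ** D) = trace (D ** (D ** R2))"
      using trace_mul_sym[of "D ** R2" D] by (simp add: matrix_mul_assoc)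
    thus ?thesis by (simp add: matrix_add_ldistrib trace_add matrix_mul_assoc)
  qed
  also have "\<dots> = 0" using z by (simp add: trace_def matrix_matrix_mult_def)
  finally have tz: "trace (D ** R1 ** D) + trace (D ** R2 ** D) = 0" .
  define f1 where "f1 i = (D *v axis i 1) \<bullet> (R1 *v (D *v axis i 1))" for i
  define f2 where "f2 i = (D *v axis i 1) \<bullet> (R2 *v (D *v axis i 1))" for i
  have f1p: "f1 i \<ge> 0" for i using p1 by (simp add: psd_def f1_def)
  have f2p: "f2 i \<ge> 0" for i using p2 by (simp add: psd_def f2_def)
  have "(\<Sum>i\<in>UNIV. f1 i) + (\<Sum>i\<in>UNIV. f2 i) = 0"
    using tz unfolding trace_DRD[OF symD] f1_def f2_def .
  moreover have "(\<Sum>i\<in>UNIV. f1 i) \<ge> 0" "(\<Sum>i\<in>UNIV. f2 i) \<ge> 0"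
    using f1p f2p by (auto intro: sum_nonneg)
  ultimately have "(\<Sum>i\<in>UNIV. f1 i) = 0" "(\<Sum>i\<in>UNIV. f2 i) = 0" by linarith+
  hence "\<forall>i\<in>UNIV. f1 i = 0" "\<forall>i\<in>UNIV. f2 i = 0"
    using f1p f2p by (simp_all add: sum_nonneg_eq_0_iff)
  hence k1: "R1 *v (D *v axis i 1) = 0" and k2: "R2 *v (D *v axis i 1) = 0" for i
    using psd_zero[OF p1] psd_zero[OF p2] unfolding f1_def f2_def by auto
  have "D *v (D *v axis i 1) = 0" for i
    using k1[of i] k2[of i] unfolding D_def by (simp add: matrix_vector_mult_diff_rdistrib)
  hence "(D *v axis i 1) \<bullet> (D *v axis i 1) = 0" for i
    using sym_dot[OF symD, of "axis i 1" "D *v axis i 1"] by simp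
  hence col: "D *v axis i 1 = 0" for i by simp
  have "D = 0"
  proof (rule vec_eq_iff[THEN iffD2, rule_format], rule vec_eq_iff[THEN iffD2, rule_format])
    fix i j
    have "D $ i $ j = (D *v axis j 1) $ i"
      by (simp add: matrix_vector_mult_def axis_def if_distrib cong: if_cong)
    thus "D $ i $ j = 0 $ i $ j" using col[of j] by simp
  qed
  thus ?thesis unfolding D_def by simp
qed

lemma msqrt_props:
  fixes S :: "real^'n^'n"
  assumes "psd S"
  shows "psd (msqrt S) \<and> msqrt S ** msqrt S = S"
proof -
  have "\<exists>!R. psd R \<and> R ** R = S"
    using psd_sqrt_exists[OF assms] psd_sqrt_unique by blast
  thus ?thesis unfolding msqrt_def by (rule theI')
qed

lemma matrix_inv_props:
  assumes "invertible (A :: 'a::semiring_1^'n^'n)"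
  shows "A ** matrix_inv A = mat 1 \<and> matrix_inv A ** A = mat 1"
  using assms unfolding invertible_def matrix_inv_def by (rule someI_ex)

lemma mat_mul_left: "(mat c ** M) = (\<chi> i j. c * M $ i $ j)" for M :: "'a::comm_ring_1^'n^'m"
proof -
  have "(mat c ** M) $ i $ j = c * M $ i $ j" for i j
  proof -
    have "(mat c ** M) $ i $ j = (\<Sum>k\<in>UNIV. (mat c :: 'a^'m^'m) $ i $ k * M $ k $ j)"
      by (simp add: matrix_matrix_mult_def)
    also have "\<dots> = (\<Sum>k\<in>UNIV. if k = i then c * M $ k $ j else 0)"
      by (rule sum.cong) (auto simp: mat_def)
    also have "\<dots> = c * M $ i $ j" by simp
    finally show ?thesis .
  qed
  thus ?thesis by (simp add: vec_eq_iff)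
qed

lemma det_mat: "det (mat c :: 'a::comm_ring_1^'n^'n) = c ^ CARD('n)"
  by (subst det_diagonal) (auto simp: mat_def)

lemma charpoly_finite:
  fixes A :: "real^'n^'n"
  shows "finite {l. det (mat l - cmat A) = 0}"
proof -
  define E where "E t = (\<chi> i j. (if i = j then 1 else 0) - t * cmat A $ i $ j)" for t :: complex
  define p where "p = (\<Sum>\<pi> | \<pi> permutes (UNIV::'n set). of_int (sign \<pi>) *
      (\<Prod>i\<in>UNIV. [: (if i = \<pi> i then 1 else 0), - cmat A $ i $ \<pi> i :]))"
  have pe: "poly p t = det (E t)" for t
    unfolding p_def det_def E_def by (simp add: poly_sum poly_prod algebra_simps)
  have "E 0 = mat 1" unfolding E_def by (simp add: vec_eq_iff mat_def)
  hence "poly p 0 = 1" using pe by simp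
  hence p0: "p \<noteq> 0" by auto
  have sub: "{l. det (mat l - cmat A) = 0} \<subseteq> insert 0 (inverse ` {t. poly p t = 0})"
  proof
    fix l assume "l \<in> {l. det (mat l - cmat A) = 0}"
    hence l: "det (mat l - cmat A) = 0" by simp
    show "l \<in> insert 0 (inverse ` {t. poly p t = 0})"
    proof (cases "l = 0")
      case False
      have "mat l - cmat A = mat l ** E (inverse l)"
        unfolding mat_mul_left E_def using False
        by (simp add: vec_eq_iff mat_def algebra_simps)
      hence "det (mat l - cmat A) = l ^ CARD('n) * det (E (inverse l))"
        by (simp add: det_mul det_mat)
      hence "poly p (inverse l) = 0" using l False pe by simp
      thus ?thesis by (intro insertI2 image_eqI[of _ _ "inverse l"]) auto
    qed simp
  qed
  show ?thesis
    by (rule finite_subset[OF sub]) (simp add: poly_roots_finite[OF p0])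
qed

lemma spec_rad_ge:
  fixes A :: "real^'n^'n"
  assumes "det (mat l - cmat A) = 0"
  shows "cmod l \<le> spec_rad A"
proof -
  have "{cmod l | l. det (mat l - cmat A) = 0} = cmod ` {l. det (mat l - cmat A) = 0}"
    by (rule setcompr_eq_image)
  hence fin: "finite {cmod l | l. det (mat l - cmat A) = 0}" using charpoly_finite[of A] by simp
  show ?thesis unfolding spec_rad_def
    by (rule Max_ge[OF fin]) (use assms in blast)
qed

definition sm :: "'a::comm_ring_1 \<Rightarrow> 'a^'n^'m \<Rightarrow> 'a^'n^'m" where
  "sm k M = (\<chi> i j. k * M $ i $ j)"

lemma sm_nth[simp]: "sm k M $ i $ j = k * M $ i $ j" by (simp add: sm_def)

lemma sm_mult_left: "sm k A ** B = sm k (A ** B)"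
  by (simp add: vec_eq_iff matrix_matrix_mult_def sum_distrib_left mult.assoc)
lemma sm_mult_right: "A ** sm k B = sm k (A ** B)"
  by (simp add: vec_eq_iff matrix_matrix_mult_def sum_distrib_left mult_ac)
lemma sm_add: "sm k (A + B) = sm k A + sm k B"
  by (simp add: vec_eq_iff algebra_simps)
lemma sm_sub: "sm k (A - B) = sm k A - sm k (B :: 'a::comm_ring_1^'n^'m)"
  by (simp add: vec_eq_iff algebra_simps)
lemma sm_sm: "sm k (sm l A) = sm (k * l) A"
  by (simp add: vec_eq_iff algebra_simps)
lemma mat_mult_left: "mat k ** A = sm k A"
  by (simp add: mat_mul_left sm_def)
lemma mat_mult_right: "A ** mat k = sm k A"
proof -
  have "(A ** mat k) $ i $ j = k * A $ i $ j" for i j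
  proof -
    have "(A ** mat k) $ i $ j = (\<Sum>l\<in>UNIV. A $ i $ l * (mat k :: 'a^_^_) $ l $ j)"
      by (simp add: matrix_matrix_mult_def)
    also have "\<dots> = (\<Sum>l\<in>UNIV. if l = j then k * A $ i $ l else 0)"
      by (rule sum.cong) (auto simp: mat_def)
    also have "\<dots> = k * A $ i $ j" by simp
    finally show ?thesis .
  qed
  thus ?thesis by (simp add: vec_eq_iff)
qed

lemma neg_mult_left: "(- A) ** B = - (A ** (B::'a::ring_1^'n^'m))"
  by (simp add: vec_eq_iff matrix_matrix_mult_def sum_negf)
lemma neg_mult_right: "A ** (- B) = - (A ** (B::'a::ring_1^'n^'m))"
  by (simp add: vec_eq_iff matrix_matrix_mult_def sum_negf)
lemma sm_neg: "sm k (- A) = - sm k A"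
  by (simp add: vec_eq_iff)

lemma ct_nth[simp]: "ctranspose A $ i $ j = cnj (A $ j $ i)" by (simp add: ctranspose_def)
lemma ct_mult: "ctranspose (A ** B) = ctranspose B ** ctranspose A"
  by (simp add: vec_eq_iff matrix_matrix_mult_def mult.commute)
lemma ct_ct[simp]: "ctranspose (ctranspose A) = A"
  by (simp add: vec_eq_iff)
lemma ct_add: "ctranspose (A + B) = ctranspose A + ctranspose B"
  by (simp add: vec_eq_iff)
lemma ct_sub: "ctranspose (A - B) = ctranspose A - ctranspose B"
  by (simp add: vec_eq_iff)
lemma ct_sm: "ctranspose (sm k A) = sm (cnj k) (ctranspose A)"
  by (simp add: vec_eq_iff)

lemma cmat_nth[simp]: "cmat A $ i $ j = complex_of_real (A $ i $ j)" by (simp add: cmat_def)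
lemma cmat_mult: "cmat (A ** B) = cmat A ** cmat B"
  by (simp add: vec_eq_iff matrix_matrix_mult_def)
lemma cmat_add: "cmat (A + B) = cmat A + cmat B"
  by (simp add: vec_eq_iff)
lemma cmat_sub: "cmat (A - B) = cmat A - cmat B"
  by (simp add: vec_eq_iff)
lemma cmat_mat: "cmat (mat k) = mat (complex_of_real k)"
  by (simp add: vec_eq_iff mat_def)
lemma ct_cmat: "ctranspose (cmat A) = cmat (transpose A)"
  by (simp add: vec_eq_iff transpose_def)

lemma inner_abstract:
  fixes a Q :: "complex^'n^'n" and b :: "complex^'m^'n" and c :: "complex^'n^'o" and d :: "complex^'m^'o"
    and G :: "complex^'n^'n"
  assumes F1: "ctranspose a ** Q ** a + ctranspose c ** c = Q"
    and F2: "ctranspose b ** Q ** b + ctranspose d ** d = mat 1"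
    and F3: "ctranspose a ** Q ** b + ctranspose c ** d = 0"
    and QH: "ctranspose Q = Q"
    and z: "cnj z * z = 1"
    and G: "(mat 1 - sm z a) ** G = mat 1"
  shows "ctranspose (d + sm z (c ** G ** b)) ** (d + sm z (c ** G ** b)) = mat 1"
proof -
  define Y where "Y = G ** b"
  define V where "V = a ** Y"
  have bY: "b = Y - sm z V"
  proof -
    have "b = (mat 1 - sm z a) ** G ** b" using G by simp
    also have "\<dots> = Y - sm z V" unfolding Y_def V_def
      by (simp add: matrix_sub_rdistrib sm_mult_left matrix_mul_assoc)
    finally show ?thesis .
  qed
  have F3': "ctranspose b ** Q ** a + ctranspose d ** c = 0"
  proof -
    have "ctranspose (ctranspose a ** Q ** b + ctranspose c ** d) = 0"
      using F3 by (simp add: vec_eq_iff)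
    thus ?thesis by (simp add: ct_add ct_mult QH matrix_mul_assoc)
  qed
  have e1: "ctranspose d ** c = - (ctranspose b ** Q ** a)" using F3' by (simp add: eq_neg_iff_add_eq_0 add.commute)
  have e2: "ctranspose c ** d = - (ctranspose a ** Q ** b)" using F3 by (simp add: eq_neg_iff_add_eq_0 add.commute)
  have e3: "ctranspose c ** c = Q - ctranspose a ** Q ** a" using F1 by (simp add: algebra_simps)
  have e4: "ctranspose d ** d = mat 1 - ctranspose b ** Q ** b" using F2 by (simp add: algebra_simps)
  define W where "W = c ** Y"
  define cz where "cz = cnj z"
  have T: "d + sm z (c ** G ** b) = d + sm z W" unfolding W_def Y_def by (simp add: matrix_mul_assoc)
  have s1: "ctranspose (d + sm z W) ** (d + sm z W)
      = ctranspose d ** d + sm z (ctranspose d ** W) + sm cz (ctranspose W ** d)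
        + sm (cz * z) (ctranspose W ** W)"
    unfolding cz_def
    by (simp add: ct_add ct_sm matrix_add_ldistrib matrix_add_rdistrib' sm_mult_left sm_mult_right sm_sm sm_add vec_eq_iff algebra_simps)
  have s2: "ctranspose d ** W = - (ctranspose b ** Q ** V)"
    unfolding W_def V_def by (simp add: matrix_mul_assoc e1 neg_mult_left)
  have "ctranspose W ** d = ctranspose Y ** (ctranspose c ** d)"
    unfolding W_def by (simp add: ct_mult matrix_mul_assoc)
  also have "\<dots> = - (ctranspose V ** Q ** b)"
    unfolding e2 V_def by (simp add: neg_mult_right ct_mult matrix_mul_assoc)
  finally have s3: "ctranspose W ** d = - (ctranspose V ** Q ** b)" .
  have "ctranspose W ** W = ctranspose Y ** (ctranspose c ** c) ** Y"
    unfolding W_def by (simp add: ct_mult matrix_mul_assoc)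
  also have "\<dots> = ctranspose Y ** Q ** Y - ctranspose V ** Q ** V"
    unfolding e3 V_def
    by (simp add: matrix_mul_assoc ct_mult matrix_sub_ldistrib matrix_sub_rdistrib)
  finally have s4: "ctranspose W ** W = ctranspose Y ** Q ** Y - ctranspose V ** Q ** V" .
  have bH: "ctranspose b = ctranspose Y - sm cz (ctranspose V)"
    unfolding bY cz_def by (simp add: ct_sub ct_sm)
  have s5: "ctranspose b ** Q ** b = ctranspose Y ** Q ** Y - sm z (ctranspose Y ** Q ** V)
      - sm cz (ctranspose V ** Q ** Y) + sm (cz * z) (ctranspose V ** Q ** V)"
    unfolding bH by (subst bY)
      (simp add: matrix_sub_ldistrib matrix_sub_rdistrib sm_mult_left sm_mult_right sm_sm sm_sub vec_eq_iff algebra_simps)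
  have s6: "ctranspose b ** Q ** V = ctranspose Y ** Q ** V - sm cz (ctranspose V ** Q ** V)"
    unfolding bH by (simp add: matrix_sub_rdistrib sm_mult_left)
  have s7: "ctranspose V ** Q ** b = ctranspose V ** Q ** Y - sm z (ctranspose V ** Q ** V)"
    by (subst bY) (simp add: matrix_sub_ldistrib sm_mult_right)
  have zz: "cz * z = 1" using z unfolding cz_def .
  have "ctranspose (d + sm z W) ** (d + sm z W) = mat 1"
    unfolding s1 s2 s3 s4 e4 s5 s6 s7
    using zz by (simp add: vec_eq_iff algebra_simps)
  thus ?thesis unfolding T .
qed

definition stack :: "'a^'n^'r \<Rightarrow> 'a^'n^'m \<Rightarrow> 'a^'n^('r + 'm)" where
  "stack X Y = (\<chi> i. case i of Inl j \<Rightarrow> X $ j | Inr j \<Rightarrow> Y $ j)"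

lemma sum_UNIV_sum: "(\<Sum>k\<in>(UNIV::('r::finite + 'm::finite) set). f k) = (\<Sum>k\<in>UNIV. f (Inl k)) + (\<Sum>k\<in>UNIV. f (Inr k))"
  by (subst UNIV_Plus_UNIV[symmetric], subst sum.Plus) auto

lemma stack_mult:
  fixes X :: "'a::comm_ring_1^'n^'r" and Y :: "'a^'n^'m" and U :: "'a^'k^'r" and V :: "'a^'k^'m"
  shows "transpose (stack X Y) ** stack U V = transpose X ** U + transpose Y ** V"
  by (simp add: vec_eq_iff matrix_matrix_mult_def transpose_def stack_def sum_UNIV_sum)

lemma sqrt_facts:
  fixes S :: "real^'n^'n"
  assumes "pd S"
  shows "transpose (msqrt S) = msqrt S" "msqrt S ** msqrt S = S"
    "msqrt S ** msqrt_inv S = mat 1" "msqrt_inv S ** msqrt S = mat 1"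
    "transpose (msqrt_inv S) = msqrt_inv S"
proof -
  have psdS: "psd S" unfolding psd_def
  proof (intro conjI allI)
    show "sym_mat S" using assms by (simp add: pd_def)
    fix x :: "real^'n"
    show "0 \<le> x \<bullet> (S *v x)"
      using assms unfolding pd_def by (cases "x = 0") (auto intro: less_imp_le)
  qed
  have m: "psd (msqrt S)" "msqrt S ** msqrt S = S" using msqrt_props[OF psdS] by auto
  show sh: "transpose (msqrt S) = msqrt S" using m(1) by (rule psd_sym)
  show "msqrt S ** msqrt S = S" by (rule m(2))
  have "\<forall>x. msqrt S *v x = 0 \<longrightarrow> x = 0"
  proof (intro allI impI)
    fix x assume "msqrt S *v x = 0"
    hence "S *v x = 0" using m(2) by (metis matrix_vector_mul_assoc matrix_vector_mult_0_right)
    hence "x \<bullet> (S *v x) = 0" by simp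
    thus "x = 0" using assms unfolding pd_def by force
  qed
  hence "invertible (msqrt S)" by (simp add: invertible_left_inverse matrix_left_invertible_ker)
  from matrix_inv_props[OF this]
  show i1: "msqrt S ** msqrt_inv S = mat 1" and i2: "msqrt_inv S ** msqrt S = mat 1"
    unfolding msqrt_inv_def by auto
  have "transpose (msqrt_inv S) ** msqrt S = mat 1"
    using arg_cong[OF i1, of transpose] sh by (simp add: matrix_transpose_mul transpose_mat)
  hence "transpose (msqrt_inv S) ** msqrt S ** msqrt_inv S = msqrt_inv S" by simp
  thus "transpose (msqrt_inv S) = msqrt_inv S" using i1 by (simp add: matrix_mul_assoc[symmetric])
qed


lemma unit_circle_inv:
  fixes \<alpha> :: "real^'n^'n"
  assumes sr: "spec_rad \<alpha> < 1" and z: "cmod z = 1"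
  shows "invertible (mat 1 - sm z (cmat \<alpha>))"
proof -
  have z0: "z \<noteq> 0" using z by auto
  have "mat 1 - sm z (cmat \<alpha>) = mat z ** (mat (inverse z) - cmat \<alpha>)"
    unfolding mat_mult_left using z0 by (simp add: vec_eq_iff mat_def algebra_simps)
  hence "det (mat 1 - sm z (cmat \<alpha>)) = z ^ CARD('n) * det (mat (inverse z) - cmat \<alpha>)"
    by (simp add: det_mul det_mat)
  moreover have "det (mat (inverse z) - cmat \<alpha>) \<noteq> 0"
  proof
    assume "det (mat (inverse z) - cmat \<alpha>) = 0"
    hence "cmod (inverse z) \<le> spec_rad \<alpha>" by (rule spec_rad_ge)
    moreover have "cmod (inverse z) = 1" using z by (simp add: norm_inverse)
    ultimately show False using sr by simp
  qed
  ultimately have "det (mat 1 - sm z (cmat \<alpha>)) \<noteq> 0" using z0 by simp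
  thus ?thesis by (simp add: invertible_det_nz)
qed

lemma tf_sm:
  "tf \<alpha> \<beta> \<gamma> \<delta> \<omega> = cmat \<delta> + sm (exp (\<i> * complex_of_real \<omega>))
     (cmat \<gamma> ** matrix_inv (mat 1 - sm (exp (\<i> * complex_of_real \<omega>)) (cmat \<alpha>)) ** cmat \<beta>)"
  unfolding tf_def mat_mult_right mat_mult_left sm_mult_left ..

lemma inner_concrete:
  fixes \<alpha> Q :: "real^'n^'n" and \<beta> :: "real^'m^'n" and \<Phi>c :: "real^'n^'r" and \<Psi>c :: "real^'m^'r"
    and L :: "real^'n^'m" and q :: real
  defines "N \<equiv> mat 1 - transpose \<beta> ** Q ** \<beta> - q *\<^sub>R (transpose \<Psi>c ** \<Psi>c)"
  defines "S \<equiv> matrix_inv N"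
  assumes invN: "invertible N" and pdS: "pd S" and Qs: "transpose Q = Q" and q: "0 \<le> q"
    and DARE: "Q = transpose \<alpha> ** Q ** \<alpha> + q *\<^sub>R (transpose \<Phi>c ** \<Phi>c) + transpose L ** N ** L"
    and Ldef: "L = S ** (transpose \<beta> ** Q ** \<alpha> + q *\<^sub>R (transpose \<Psi>c ** \<Phi>c))"
    and sr: "spec_rad \<alpha> < 1"
  shows "inner_sys \<alpha> \<beta>
           ((\<chi> i. case i of Inl j \<Rightarrow> sqrt q *\<^sub>R (\<Phi>c $ j)
                          | Inr j \<Rightarrow> - ((msqrt_inv S ** L) $ j)) :: real^'n^('r + 'm))
           ((\<chi> i. case i of Inl j \<Rightarrow> sqrt q *\<^sub>R (\<Psi>c $ j)
                          | Inr j \<Rightarrow> msqrt_inv S $ j) :: real^'m^('r + 'm))"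
proof -
  define Shi where "Shi = msqrt_inv S"
  define \<gamma> where "\<gamma> = stack (sqrt q *\<^sub>R \<Phi>c) (- (Shi ** L))"
  define \<delta> where "\<delta> = stack (sqrt q *\<^sub>R \<Psi>c) Shi"
  have g: "((\<chi> i. case i of Inl j \<Rightarrow> sqrt q *\<^sub>R (\<Phi>c $ j)
                          | Inr j \<Rightarrow> - ((msqrt_inv S ** L) $ j)) :: real^'n^('r + 'm)) = \<gamma>"
    unfolding \<gamma>_def stack_def Shi_def by (simp add: vec_eq_iff split: sum.split)
  have d: "((\<chi> i. case i of Inl j \<Rightarrow> sqrt q *\<^sub>R (\<Psi>c $ j)
                          | Inr j \<Rightarrow> msqrt_inv S $ j) :: real^'m^('r + 'm)) = \<delta>"
    unfolding \<delta>_def stack_def Shi_def by (simp add: vec_eq_iff split: sum.split)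
  have NS: "N ** S = mat 1" "S ** N = mat 1" using matrix_inv_props[OF invN] unfolding S_def by auto
  note sf = sqrt_facts[OF pdS, folded Shi_def]
  have Ss: "transpose S = S" using pdS by (simp add: pd_def sym_mat_def)
  have ShiN: "transpose Shi ** Shi = N"
  proof -
    have "Shi ** Shi = Shi ** Shi ** (S ** N)" using NS by simp
    also have "\<dots> = Shi ** Shi ** ((msqrt S ** msqrt S) ** N)" using sf(2) by simp
    also have "\<dots> = Shi ** (Shi ** msqrt S) ** msqrt S ** N" by (simp add: matrix_mul_assoc)
    also have "\<dots> = (Shi ** msqrt S) ** N" using sf(4) by simp
    also have "\<dots> = N" using sf(4) by simp
    finally show ?thesis using sf(5) by simp
  qed
  have qq: "sqrt q * sqrt q = q" using q by simp
  have F1: "transpose \<alpha> ** Q ** \<alpha> + transpose \<gamma> ** \<gamma> = Q"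
  proof -
    have "transpose \<gamma> ** \<gamma> = q *\<^sub>R (transpose \<Phi>c ** \<Phi>c) + transpose L ** (transpose Shi ** Shi) ** L"
      unfolding \<gamma>_def stack_mult
      by (simp add: transpose_scaleR transpose_uminus neg_mult_left neg_mult_right matrix_transpose_mul
            matrix_scalar_ac scalar_matrix_assoc[symmetric] qq abs_of_nonneg[OF q] matrix_mul_assoc)
    thus ?thesis using DARE ShiN by (simp add: add.assoc)
  qed
  have F2: "transpose \<beta> ** Q ** \<beta> + transpose \<delta> ** \<delta> = mat 1"
  proof -
    have "transpose \<delta> ** \<delta> = q *\<^sub>R (transpose \<Psi>c ** \<Psi>c) + N"
      unfolding \<delta>_def stack_mult ShiN
      by (simp add: transpose_scaleR matrix_scalar_ac scalar_matrix_assoc[symmetric] qq abs_of_nonneg[OF q])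
    thus ?thesis unfolding N_def by simp
  qed
  have F3: "transpose \<alpha> ** Q ** \<beta> + transpose \<gamma> ** \<delta> = 0"
  proof -
    have "transpose \<gamma> ** \<delta> = q *\<^sub>R (transpose \<Phi>c ** \<Psi>c) - transpose L ** (transpose Shi ** Shi)"
      unfolding \<gamma>_def \<delta>_def stack_mult
      by (simp add: transpose_scaleR transpose_uminus neg_mult_left matrix_transpose_mul
            matrix_scalar_ac scalar_matrix_assoc[symmetric] qq abs_of_nonneg[OF q] matrix_mul_assoc)
    also have "transpose L ** (transpose Shi ** Shi) = transpose \<alpha> ** Q ** \<beta> + q *\<^sub>R (transpose \<Phi>c ** \<Psi>c)"
    proof -
      have "transpose L ** (transpose Shi ** Shi) = transpose (transpose \<beta> ** Q ** \<alpha> + q *\<^sub>R (transpose \<Psi>c ** \<Phi>c)) ** (S ** N)"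
        unfolding ShiN Ldef by (simp add: matrix_transpose_mul Ss matrix_mul_assoc)
      also have "\<dots> = transpose \<alpha> ** Q ** \<beta> + q *\<^sub>R (transpose \<Phi>c ** \<Psi>c)"
        using NS by (simp add: transpose_add transpose_scaleR matrix_transpose_mul Qs matrix_mul_assoc)
      finally show ?thesis .
    qed
    finally show ?thesis by simp
  qed
  have CF1: "ctranspose (cmat \<alpha>) ** cmat Q ** cmat \<alpha> + ctranspose (cmat \<gamma>) ** cmat \<gamma> = cmat Q"
    using arg_cong[OF F1, of cmat] by (simp add: ct_cmat cmat_mult cmat_add)
  have CF2: "ctranspose (cmat \<beta>) ** cmat Q ** cmat \<beta> + ctranspose (cmat \<delta>) ** cmat \<delta> = mat 1"
    using arg_cong[OF F2, of cmat] by (simp add: ct_cmat cmat_mult cmat_add cmat_mat)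
  have CF3: "ctranspose (cmat \<alpha>) ** cmat Q ** cmat \<beta> + ctranspose (cmat \<gamma>) ** cmat \<delta> = 0"
  proof -
    have c0: "cmat (0::real^'m^'n) = 0" by (simp add: vec_eq_iff)
    show ?thesis using arg_cong[OF F3, of cmat] by (simp add: ct_cmat cmat_mult cmat_add c0)
  qed
  have CQ: "ctranspose (cmat Q) = cmat Q" by (simp add: ct_cmat Qs)
  have "ctranspose (tf \<alpha> \<beta> \<gamma> \<delta> \<omega>) ** tf \<alpha> \<beta> \<gamma> \<delta> \<omega> = mat 1" for \<omega>
  proof -
    define z where "z = exp (\<i> * complex_of_real \<omega>)"
    have cz: "cmod z = 1" unfolding z_def by (simp add: norm_exp_i_times)
    have zz: "cnj z * z = 1"
    proof -
      have "(Re z)\<^sup>2 + (Im z)\<^sup>2 = (cmod z)\<^sup>2" by (simp add: cmod_def)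
      hence "z * cnj z = complex_of_real ((cmod z)\<^sup>2)" by (simp add: complex_mult_cnj)
      thus ?thesis using cz by (simp add: mult.commute)
    qed
    have G: "(mat 1 - sm z (cmat \<alpha>)) ** matrix_inv (mat 1 - sm z (cmat \<alpha>)) = mat 1"
      using matrix_inv_props[OF unit_circle_inv[OF sr cz]] by auto
    show ?thesis unfolding tf_sm z_def[symmetric]
      by (rule inner_abstract[OF CF1 CF2 CF3 CQ zz G])
  qed
  thus ?thesis unfolding inner_sys_def g d by blast
qed

lemma abs_mult_le_sq: "\<bar>a * b\<bar> \<le> a\<^sup>2 + (b::real)\<^sup>2"
proof -
  have "0 \<le> (\<bar>a\<bar> - \<bar>b\<bar>)\<^sup>2" by simp
  hence "2 * (\<bar>a\<bar> * \<bar>b\<bar>) \<le> a\<^sup>2 + b\<^sup>2" by (simp add: power2_eq_square algebra_simps)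
  moreover have "\<bar>a\<bar> * \<bar>b\<bar> \<ge> 0" by simp
  moreover have "\<bar>a * b\<bar> = \<bar>a\<bar> * \<bar>b\<bar>" by (rule abs_mult)
  ultimately show ?thesis by linarith
qed

lemma meas_nth: "X \<in> borel_measurable M \<Longrightarrow> (\<lambda>\<omega>. X \<omega> $ i) \<in> borel_measurable M"
  by (rule borel_measurable_continuous_on[where f="\<lambda>x. x $ i"]) (intro continuous_intros, assumption)

context prob_space
begin

definition L2 :: "('a \<Rightarrow> real) \<Rightarrow> bool" where
  "L2 f \<longleftrightarrow> f \<in> borel_measurable M \<and> integrable M (\<lambda>\<omega>. (f \<omega>)\<^sup>2)"

lemma L2_meas: "L2 f \<Longrightarrow> f \<in> borel_measurable M" by (simp add: L2_def)
lemma L2_sq: "L2 f \<Longrightarrow> integrable M (\<lambda>\<omega>. (f \<omega>)\<^sup>2)" by (simp add: L2_def)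

lemma L2_mult: assumes "L2 f" "L2 g" shows "integrable M (\<lambda>\<omega>. f \<omega> * g \<omega>)"
proof (rule Bochner_Integration.integrable_bound)
  show "integrable M (\<lambda>\<omega>. (f \<omega>)\<^sup>2 + (g \<omega>)\<^sup>2)" using assms by (simp add: L2_def)
  have [measurable]: "f \<in> borel_measurable M" "g \<in> borel_measurable M" using assms by (auto simp: L2_def)
  show "(\<lambda>\<omega>. f \<omega> * g \<omega>) \<in> borel_measurable M" by measurable
  show "AE \<omega> in M. norm (f \<omega> * g \<omega>) \<le> norm ((f \<omega>)\<^sup>2 + (g \<omega>)\<^sup>2)"
  proof (rule AE_I2)
    fix \<omega>
    have "\<bar>f \<omega> * g \<omega>\<bar> \<le> (f \<omega>)\<^sup>2 + (g \<omega>)\<^sup>2" by (rule abs_mult_le_sq)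
    thus "norm (f \<omega> * g \<omega>) \<le> norm ((f \<omega>)\<^sup>2 + (g \<omega>)\<^sup>2)" by simp
  qed
qed

lemma L2_const: "L2 (\<lambda>\<omega>. c)" by (simp add: L2_def)

lemma L2_integrable: assumes "L2 f" shows "integrable M f"
  using L2_mult[OF assms L2_const[of 1]] by simp

lemma L2_add: assumes "L2 f" "L2 g" shows "L2 (\<lambda>\<omega>. f \<omega> + g \<omega>)"
proof -
  have [measurable]: "f \<in> borel_measurable M" "g \<in> borel_measurable M" using assms by (auto simp: L2_def)
  have "integrable M (\<lambda>\<omega>. (f \<omega>)\<^sup>2 + (g \<omega>)\<^sup>2 + 2 * (f \<omega> * g \<omega>))"
    using assms L2_mult[OF assms] unfolding L2_def by auto
  moreover have "(\<lambda>\<omega>. f \<omega> + g \<omega>) \<in> borel_measurable M" by measurable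
  ultimately show ?thesis unfolding L2_def power2_sum by (simp add: mult.assoc)
qed

lemma L2_cmult: assumes "L2 f" shows "L2 (\<lambda>\<omega>. c * f \<omega>)"
proof -
  have [measurable]: "f \<in> borel_measurable M" using assms by (auto simp: L2_def)
  have "(\<lambda>\<omega>. c * f \<omega>) \<in> borel_measurable M" by measurable
  thus ?thesis using assms by (simp add: L2_def power_mult_distrib)
qed

lemma L2_neg: assumes "L2 f" shows "L2 (\<lambda>\<omega>. - f \<omega>)"
  using L2_cmult[OF assms, of "-1"] by simp

lemma L2_diff: assumes "L2 f" "L2 g" shows "L2 (\<lambda>\<omega>. f \<omega> - g \<omega>)"
  using L2_add[OF assms(1) L2_neg[OF assms(2)]] by simp

lemma L2_sum: "finite I \<Longrightarrow> (\<And>i. i \<in> I \<Longrightarrow> L2 (f i)) \<Longrightarrow> L2 (\<lambda>\<omega>. \<Sum>i\<in>I. f i \<omega>)"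
proof (induction I rule: finite_induct)
  case empty then show ?case using L2_const[of 0] by simp
next
  case (insert i I) then show ?case by (simp add: L2_add)
qed

definition L2v :: "('a \<Rightarrow> real^'n) \<Rightarrow> bool" where
  "L2v X \<longleftrightarrow> (\<forall>i. L2 (\<lambda>\<omega>. X \<omega> $ i))"

lemma L2v_mv: assumes "L2v X" shows "L2v (\<lambda>\<omega>. A *v X \<omega>)"
  using assms unfolding L2v_def matrix_vector_mult_def
  by (auto intro!: L2_sum L2_cmult)

lemma L2v_add: assumes "L2v X" "L2v Y" shows "L2v (\<lambda>\<omega>. X \<omega> + Y \<omega>)"
  using assms unfolding L2v_def by (auto intro!: L2_add)

lemma L2v_diff: assumes "L2v X" "L2v Y" shows "L2v (\<lambda>\<omega>. X \<omega> - Y \<omega>)"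
  using assms unfolding L2v_def by (auto intro!: L2_diff)

lemma L2v_inner: assumes "L2v X" "L2v Y"
  shows "integrable M (\<lambda>\<omega>. X \<omega> \<bullet> Y \<omega>)"
    "integral\<^sup>L M (\<lambda>\<omega>. X \<omega> \<bullet> Y \<omega>) = (\<Sum>i\<in>UNIV. integral\<^sup>L M (\<lambda>\<omega>. X \<omega> $ i * Y \<omega> $ i))"
  using assms unfolding L2v_def inner_vec_def
  by (auto intro!: Bochner_Integration.integral_sum L2_mult)

lemma L2v_quad: assumes "L2v X"
  shows "integrable M (\<lambda>\<omega>. X \<omega> \<bullet> (Q *v X \<omega>))"
    "integral\<^sup>L M (\<lambda>\<omega>. X \<omega> \<bullet> (Q *v X \<omega>)) =
       (\<Sum>i\<in>UNIV. \<Sum>j\<in>UNIV. Q $ i $ j * integral\<^sup>L M (\<lambda>\<omega>. X \<omega> $ i * X \<omega> $ j))"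
proof -
  have int: "integrable M (\<lambda>\<omega>. X \<omega> $ i * X \<omega> $ j)" for i j
    using assms unfolding L2v_def by (auto intro: L2_mult)
  have eq: "X \<omega> \<bullet> (Q *v X \<omega>) = (\<Sum>i\<in>UNIV. \<Sum>j\<in>UNIV. Q $ i $ j * (X \<omega> $ i * X \<omega> $ j))" for \<omega>
    by (simp add: inner_vec_def matrix_vector_mult_def sum_distrib_left mult_ac)
  show "integrable M (\<lambda>\<omega>. X \<omega> \<bullet> (Q *v X \<omega>))" unfolding eq using int by auto
  show "integral\<^sup>L M (\<lambda>\<omega>. X \<omega> \<bullet> (Q *v X \<omega>)) =
       (\<Sum>i\<in>UNIV. \<Sum>j\<in>UNIV. Q $ i $ j * integral\<^sup>L M (\<lambda>\<omega>. X \<omega> $ i * X \<omega> $ j))"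
    unfolding eq using int
    by (simp add: Bochner_Integration.integral_sum integrable_mult_right)
qed

lemma L2v_norm2: assumes "L2v X"
  shows "integrable M (\<lambda>\<omega>. (norm (X \<omega>))\<^sup>2)"
    "integral\<^sup>L M (\<lambda>\<omega>. (norm (X \<omega>))\<^sup>2) = (\<Sum>i\<in>UNIV. integral\<^sup>L M (\<lambda>\<omega>. X \<omega> $ i * X \<omega> $ i))"
  using L2v_inner[OF assms assms] by (simp_all add: dot_square_norm[symmetric])

lemma L2v_of_norm:
  assumes meas: "X \<in> borel_measurable M" and sq: "integrable M (\<lambda>\<omega>. (norm (X \<omega>))\<^sup>2)"
  shows "L2v X"
  unfolding L2v_def L2_def
proof (intro allI conjI)
  fix i
  show "(\<lambda>\<omega>. X \<omega> $ i) \<in> borel_measurable M"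
    using meas by (rule meas_nth)
  show "integrable M (\<lambda>\<omega>. (X \<omega> $ i)\<^sup>2)"
  proof (rule Bochner_Integration.integrable_bound[OF sq])
    have [measurable]: "(\<lambda>\<omega>. X \<omega> $ i) \<in> borel_measurable M" using meas by (rule meas_nth)
    show "(\<lambda>\<omega>. (X \<omega> $ i)\<^sup>2) \<in> borel_measurable M" by measurable
    show "AE \<omega> in M. norm ((X \<omega> $ i)\<^sup>2) \<le> norm ((norm (X \<omega>))\<^sup>2)"
      by (intro AE_I2) (simp, metis abs_le_square_iff abs_norm_cancel component_le_norm_cart)
  qed
qed


lemma E_mv_mv:
  assumes X: "L2v X" and Y: "L2v Y"
  shows "integral\<^sup>L M (\<lambda>\<omega>. (A *v X \<omega>) $ i * (B *v Y \<omega>) $ j) =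
    (\<Sum>a\<in>UNIV. \<Sum>b\<in>UNIV. A $ i $ a * B $ j $ b * integral\<^sup>L M (\<lambda>\<omega>. X \<omega> $ a * Y \<omega> $ b))"
proof -
  have int: "integrable M (\<lambda>\<omega>. X \<omega> $ a * Y \<omega> $ b)" for a b
    using X Y unfolding L2v_def by (auto intro: L2_mult)
  have eq: "(A *v X \<omega>) $ i * (B *v Y \<omega>) $ j =
      (\<Sum>a\<in>UNIV. \<Sum>b\<in>UNIV. A $ i $ a * B $ j $ b * (X \<omega> $ a * Y \<omega> $ b))" for \<omega>
    by (simp add: matrix_vector_mult_def sum_product mult_ac)
  show ?thesis unfolding eq using int
    by (simp add: Bochner_Integration.integral_sum integrable_mult_right)
qed

lemma L2v_mv_integrable:
  assumes X: "L2v X" and Y: "L2v Y"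
  shows "integrable M (\<lambda>\<omega>. (A *v X \<omega>) $ i * (B *v Y \<omega>) $ j)"
  using L2v_mv[OF X, of A] L2v_mv[OF Y, of B] unfolding L2v_def by (auto intro: L2_mult)

definition meanv :: "('a \<Rightarrow> real^'n) \<Rightarrow> real^'n" where
  "meanv X = (\<chi> j. integral\<^sup>L M (\<lambda>\<omega>. X \<omega> $ j))"

lemma meanv_mv: assumes "L2v X" shows "meanv (\<lambda>\<omega>. A *v X \<omega>) = A *v meanv X"
proof -
  have int: "integrable M (\<lambda>\<omega>. X \<omega> $ j)" for j
    using assms unfolding L2v_def by (auto intro: L2_integrable)
  show ?thesis
    unfolding meanv_def using int
    by (simp add: vec_eq_iff matrix_vector_mult_def Bochner_Integration.integral_sum integrable_mult_right)
qed

lemma meanv_add: assumes "L2v X" "L2v Y" shows "meanv (\<lambda>\<omega>. X \<omega> + Y \<omega>) = meanv X + meanv Y"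
proof -
  have int: "integrable M (\<lambda>\<omega>. X \<omega> $ j)" "integrable M (\<lambda>\<omega>. Y \<omega> $ j)" for j
    using assms unfolding L2v_def by (auto intro: L2_integrable)
  show ?thesis unfolding meanv_def using int by (simp add: vec_eq_iff)
qed

lemma cov_second_moment:
  assumes "L2v X"
  shows "integral\<^sup>L M (\<lambda>\<omega>. X \<omega> $ a * X \<omega> $ b) = cov_mat M X $ a $ b + meanv X $ a * meanv X $ b"
proof -
  define ma where "ma = integral\<^sup>L M (\<lambda>\<omega>. X \<omega> $ a)"
  define mb where "mb = integral\<^sup>L M (\<lambda>\<omega>. X \<omega> $ b)"
  have ia: "integrable M (\<lambda>\<omega>. X \<omega> $ a)" and ib: "integrable M (\<lambda>\<omega>. X \<omega> $ b)"
    and iab: "integrable M (\<lambda>\<omega>. X \<omega> $ a * X \<omega> $ b)"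
    using assms unfolding L2v_def by (auto intro: L2_integrable L2_mult)
  have "cov_mat M X $ a $ b = integral\<^sup>L M (\<lambda>\<omega>. (X \<omega> $ a - ma) * (X \<omega> $ b - mb))"
    unfolding cov_mat_def ma_def mb_def by simp
  also have "\<dots> = integral\<^sup>L M (\<lambda>\<omega>. X \<omega> $ a * X \<omega> $ b - mb * X \<omega> $ a - ma * X \<omega> $ b + ma * mb)"
    by (simp add: algebra_simps)
  also have "\<dots> = integral\<^sup>L M (\<lambda>\<omega>. X \<omega> $ a * X \<omega> $ b) - mb * ma - ma * mb + ma * mb"
    using ia ib iab unfolding ma_def[symmetric] mb_def[symmetric]
    by (simp add: prob_space ma_def mb_def)
  finally show ?thesis unfolding meanv_def ma_def mb_def by simp
qed

end

context prob_space
begin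

lemma stdnormal_facts:
  assumes D: "distributed M lborel X std_normal_density"
  shows "L2 X" "integral\<^sup>L M X = 0" "integral\<^sup>L M (\<lambda>\<omega>. X \<omega> * X \<omega>) = 1"
proof -
  have meas: "X \<in> borel_measurable M"
    using distributed_measurable[OF D] by (simp add: measurable_lborel1)
  have "integrable M (\<lambda>\<omega>. (X \<omega>)\<^sup>2)"
    using distributed_integrable[OF D, of "\<lambda>x. x\<^sup>2"] integrable_std_normal_moment[of 2]
    by (simp add: normal_density_nonneg)
  thus L: "L2 X" using meas by (simp add: L2_def)
  show e: "integral\<^sup>L M X = 0" using standard_normal_distributed_expectation[OF D] .
  have "variance X = 1" using standard_normal_distributed_variance[OF D] .
  thus "integral\<^sup>L M (\<lambda>\<omega>. X \<omega> * X \<omega>) = 1" using e by (simp add: power2_eq_square)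
qed

lemma indep_family_pair:
  assumes ind: "indep_vars (\<lambda>_. borel) Y UNIV" and ne: "i \<noteq> j"
    and Li: "L2 (Y i)" and Lj: "L2 (Y j)"
  shows "integral\<^sup>L M (\<lambda>\<omega>. Y i \<omega> * Y j \<omega>) = integral\<^sup>L M (Y i) * integral\<^sup>L M (Y j)"
proof -
  have "indep_vars (\<lambda>_. borel) Y (insert i {j})"
    by (rule indep_vars_subset[OF ind]) auto
  from indep_vars_sum[OF _ _ this] ne
  have "indep_var borel (Y i) borel (\<lambda>\<omega>. \<Sum>k\<in>{j}. Y k \<omega>)" by simp
  hence "indep_var borel (Y i) borel (Y j)" by simp
  thus ?thesis
    by (rule indep_var_lebesgue_integral[OF _ L2_integrable[OF Li] L2_integrable[OF Lj]])
qed

end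

lemma dotmv: "(A *v x) \<bullet> (B *v y) = x \<bullet> ((transpose A ** B) *v y)" for A :: "real^'n^'m"
proof -
  have "(A *v x) \<bullet> (B *v y) = (\<Sum>i\<in>UNIV. \<Sum>j\<in>UNIV. \<Sum>k\<in>UNIV. A$i$j * x$j * (B$i$k * y$k))"
    by (simp add: inner_vec_def matrix_vector_mult_def sum_product)
  also have "\<dots> = (\<Sum>j\<in>UNIV. \<Sum>i\<in>UNIV. \<Sum>k\<in>UNIV. A$i$j * x$j * (B$i$k * y$k))"
    by (rule sum.swap)
  also have "\<dots> = (\<Sum>j\<in>UNIV. \<Sum>k\<in>UNIV. \<Sum>i\<in>UNIV. A$i$j * x$j * (B$i$k * y$k))"
    by (rule sum.cong[OF refl], rule sum.swap)
  also have "\<dots> = x \<bullet> ((transpose A ** B) *v y)"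
    by (simp add: inner_vec_def matrix_vector_mult_def matrix_matrix_mult_def transpose_def
        sum_distrib_left sum_distrib_right mult_ac)
  finally show ?thesis .
qed

lemma dot_swap: "x \<bullet> (A *v y) = y \<bullet> (transpose A *v x)" for A :: "real^'n^'m"
proof -
  have "x \<bullet> (A *v y) = (\<Sum>i\<in>UNIV. \<Sum>j\<in>UNIV. x$i * (A$i$j * y$j))"
    by (simp add: inner_vec_def matrix_vector_mult_def sum_distrib_left)
  also have "\<dots> = (\<Sum>j\<in>UNIV. \<Sum>i\<in>UNIV. x$i * (A$i$j * y$j))" by (rule sum.swap)
  also have "\<dots> = y \<bullet> (transpose A *v x)"
    by (simp add: inner_vec_def matrix_vector_mult_def transpose_def sum_distrib_left mult_ac)
  finally show ?thesis .
qed

lemma scaleR_mv: "(c *\<^sub>R A) *v x = c *\<^sub>R (A *v x)" for A :: "real^'n^'m"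
  by (simp add: vec_eq_iff matrix_vector_mult_def sum_distrib_left mult_ac)

lemma lossless:
  fixes \<alpha> Q :: "real^'n^'n" and \<beta> :: "real^'m^'n" and \<Phi>c :: "real^'n^'r" and \<Psi>c :: "real^'m^'r"
    and L :: "real^'n^'m" and N Shi :: "real^'m^'m" and q :: real
  assumes Qs: "transpose Q = Q" and Ns: "transpose N = N" and ShiN: "transpose Shi ** Shi = N"
    and Z1: "Q = transpose \<alpha> ** Q ** \<alpha> + q *\<^sub>R (transpose \<Phi>c ** \<Phi>c) + transpose L ** N ** L"
    and Z2: "N = mat 1 - transpose \<beta> ** Q ** \<beta> - q *\<^sub>R (transpose \<Psi>c ** \<Psi>c)"
    and Z3: "N ** L = transpose \<beta> ** Q ** \<alpha> + q *\<^sub>R (transpose \<Psi>c ** \<Phi>c)"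
  shows "q * (norm (\<Phi>c *v s + \<Psi>c *v u))\<^sup>2 + (norm (Shi *v (u - L *v s)))\<^sup>2
     + (\<alpha> *v s + \<beta> *v u) \<bullet> (Q *v (\<alpha> *v s + \<beta> *v u)) = s \<bullet> (Q *v s) + (norm u)\<^sup>2"
proof -
  have sw: "(A *v x) \<bullet> (B *v y) = y \<bullet> ((transpose B ** A) *v x)" for A :: "real^'n^'k" and B :: "real^'m^'k" and x y
    by (metis dotmv inner_commute)
  have t1: "(norm (\<Phi>c *v s + \<Psi>c *v u))\<^sup>2 = s \<bullet> ((transpose \<Phi>c ** \<Phi>c) *v s)
      + 2 * (u \<bullet> ((transpose \<Psi>c ** \<Phi>c) *v s)) + u \<bullet> ((transpose \<Psi>c ** \<Psi>c) *v u)"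
  proof -
    have "(norm (\<Phi>c *v s + \<Psi>c *v u))\<^sup>2 = (\<Phi>c *v s + \<Psi>c *v u) \<bullet> (\<Phi>c *v s + \<Psi>c *v u)"
      by (simp add: dot_square_norm)
    also have "\<dots> = (\<Phi>c *v s) \<bullet> (\<Phi>c *v s) + (\<Phi>c *v s) \<bullet> (\<Psi>c *v u) + (\<Psi>c *v u) \<bullet> (\<Phi>c *v s) + (\<Psi>c *v u) \<bullet> (\<Psi>c *v u)"
      by (simp add: inner_add_left inner_add_right)
    also have "\<dots> = s \<bullet> ((transpose \<Phi>c ** \<Phi>c) *v s)
      + 2 * (u \<bullet> ((transpose \<Psi>c ** \<Phi>c) *v s)) + u \<bullet> ((transpose \<Psi>c ** \<Psi>c) *v u)"
    proof -
      have cr: "s \<bullet> ((transpose \<Phi>c ** \<Psi>c) *v u) = u \<bullet> ((transpose \<Psi>c ** \<Phi>c) *v s)"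
        using dot_swap[of s "transpose \<Phi>c ** \<Psi>c" u] by (simp add: matrix_transpose_mul)
      show ?thesis by (simp only: dotmv cr)
    qed
    finally show ?thesis .
  qed
  have t2: "(norm (Shi *v (u - L *v s)))\<^sup>2 = u \<bullet> (N *v u) - 2 * (u \<bullet> ((N ** L) *v s)) + s \<bullet> ((transpose L ** N ** L) *v s)"
  proof -
    have "(norm (Shi *v (u - L *v s)))\<^sup>2 = (u - L *v s) \<bullet> (N *v (u - L *v s))"
      by (simp only: dot_square_norm[symmetric] dotmv ShiN)
    also have "\<dots> = u \<bullet> (N *v u) - u \<bullet> (N *v (L *v s)) - (L *v s) \<bullet> (N *v u) + (L *v s) \<bullet> (N *v (L *v s))"
      by (simp add: inner_diff_left inner_diff_right matrix_vector_mult_diff_distrib)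
    also have "(L *v s) \<bullet> (N *v u) = u \<bullet> ((N ** L) *v s)"
      using sw[of L s N u] by (simp add: Ns)
    also have "(L *v s) \<bullet> (N *v (L *v s)) = s \<bullet> ((transpose L ** N ** L) *v s)"
      by (simp add: dotmv matrix_vector_mul_assoc matrix_mul_assoc)
    also have "u \<bullet> (N *v (L *v s)) = u \<bullet> ((N ** L) *v s)" by (simp add: matrix_vector_mul_assoc)
    finally show ?thesis by simp
  qed
  have t3: "(\<alpha> *v s + \<beta> *v u) \<bullet> (Q *v (\<alpha> *v s + \<beta> *v u)) = s \<bullet> ((transpose \<alpha> ** Q ** \<alpha>) *v s)
      + 2 * (u \<bullet> ((transpose \<beta> ** Q ** \<alpha>) *v s)) + u \<bullet> ((transpose \<beta> ** Q ** \<beta>) *v u)"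
  proof -
    have e: "x \<bullet> (Q *v y) = x \<bullet> (Q *v y)" for x y ..
    have "(\<alpha> *v s + \<beta> *v u) \<bullet> (Q *v (\<alpha> *v s + \<beta> *v u)) =
      (\<alpha> *v s) \<bullet> ((Q ** \<alpha>) *v s) + (\<alpha> *v s) \<bullet> ((Q ** \<beta>) *v u) + (\<beta> *v u) \<bullet> ((Q ** \<alpha>) *v s) + (\<beta> *v u) \<bullet> ((Q ** \<beta>) *v u)"
      by (simp add: inner_add_left inner_add_right matrix_vector_right_distrib matrix_vector_mul_assoc)
    also have "(\<alpha> *v s) \<bullet> ((Q ** \<beta>) *v u) = u \<bullet> ((transpose \<beta> ** Q ** \<alpha>) *v s)"
      using sw[of \<alpha> s "Q ** \<beta>" u] by (simp add: matrix_transpose_mul Qs matrix_mul_assoc)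
    finally show ?thesis by (simp add: dotmv matrix_mul_assoc)
  qed
  have S1: "s \<bullet> (Q *v s) = s \<bullet> ((transpose \<alpha> ** Q ** \<alpha>) *v s) + q * (s \<bullet> ((transpose \<Phi>c ** \<Phi>c) *v s))
      + s \<bullet> ((transpose L ** N ** L) *v s)"
    by (subst Z1) (simp add: matrix_vector_mult_add_rdistrib inner_add_right scaleR_mv)
  have S2: "(norm u)\<^sup>2 = u \<bullet> (N *v u) + u \<bullet> ((transpose \<beta> ** Q ** \<beta>) *v u) + q * (u \<bullet> ((transpose \<Psi>c ** \<Psi>c) *v u))"
  proof -
    have "mat 1 = N + transpose \<beta> ** Q ** \<beta> + q *\<^sub>R (transpose \<Psi>c ** \<Psi>c)" using Z2 by simp
    hence "u \<bullet> (mat 1 *v u) = u \<bullet> ((N + transpose \<beta> ** Q ** \<beta> + q *\<^sub>R (transpose \<Psi>c ** \<Psi>c)) *v u)" by simp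
    thus ?thesis by (simp add: matrix_vector_mult_add_rdistrib inner_add_right scaleR_mv dot_square_norm)
  qed
  have S3: "u \<bullet> ((N ** L) *v s) = u \<bullet> ((transpose \<beta> ** Q ** \<alpha>) *v s) + q * (u \<bullet> ((transpose \<Psi>c ** \<Phi>c) *v s))"
    unfolding Z3 by (simp add: matrix_vector_mult_add_rdistrib inner_add_right scaleR_mv)
  show ?thesis unfolding t1 t2 t3 S1 S2 S3 by (simp add: algebra_simps)
qed

lemma fixed_zero:
  fixes Mx :: "real^'n^'n"
  assumes sr: "spec_rad Mx < 1" and fx: "Mx *v \<mu> = \<mu>"
  shows "\<mu> = 0"
proof -
  define Mc where "Mc = mat 1 - cmat Mx"
  have "det Mc \<noteq> 0"
  proof
    assume "det Mc = 0"
    hence "cmod 1 \<le> spec_rad Mx" unfolding Mc_def by (intro spec_rad_ge) simp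
    thus False using sr by simp
  qed
  hence inv: "invertible Mc" by (simp add: invertible_det_nz)
  define \<mu>c where "\<mu>c = (\<chi> j. complex_of_real (\<mu> $ j))"
  have "cmat Mx *v \<mu>c = (\<chi> i. complex_of_real ((Mx *v \<mu>) $ i))"
    unfolding \<mu>c_def by (simp add: vec_eq_iff matrix_vector_mult_def)
  also have "\<dots> = \<mu>c" using fx unfolding \<mu>c_def by simp
  finally have e: "cmat Mx *v \<mu>c = \<mu>c" .
  have z: "Mc *v \<mu>c = 0" unfolding Mc_def by (simp add: matrix_vector_mult_diff_rdistrib e)
  have "\<mu>c = (matrix_inv Mc ** Mc) *v \<mu>c" using matrix_inv_props[OF inv] by simp
  also have "\<dots> = 0" by (simp add: matrix_vector_mul_assoc[symmetric] z)
  finally have "\<mu>c = 0" .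
  thus ?thesis unfolding \<mu>c_def by (simp add: vec_eq_iff)
qed

lemma ShiN_lemma:
  fixes N :: "real^'m^'m"
  assumes invN: "invertible N" and pdS: "pd (matrix_inv N)"
  shows "transpose (msqrt_inv (matrix_inv N)) ** msqrt_inv (matrix_inv N) = N"
proof -
  define S where "S = matrix_inv N"
  define Shi where "Shi = msqrt_inv S"
  have NS: "N ** S = mat 1" "S ** N = mat 1" using matrix_inv_props[OF invN] unfolding S_def by auto
  note sf = sqrt_facts[OF pdS[folded S_def], folded Shi_def]
  have "Shi ** Shi = Shi ** Shi ** (S ** N)" using NS by simp
  also have "\<dots> = Shi ** Shi ** ((msqrt S ** msqrt S) ** N)" using sf(2) by simp
  also have "\<dots> = Shi ** (Shi ** msqrt S) ** msqrt S ** N" by (simp add: matrix_mul_assoc)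
  also have "\<dots> = (Shi ** msqrt S) ** N" using sf(4) by simp
  also have "\<dots> = N" using sf(4) by simp
  finally show ?thesis using sf(5) unfolding Shi_def S_def by simp
qed

theorem mainTheorem7:
  fixes A :: "real^'n^'n" and B :: "real^'m^'n" and C :: "real^'n^'p" and D :: "real^'m^'p"
    and \<Phi> :: "real^'n^'r" and \<Psi> :: "real^'m^'r"
    and K :: "real^'p^'n" and M :: "real^'p^'r" and q :: real and Q :: "real^'n^'n"
    and Pr :: "'w measure"
    and v :: "int \<Rightarrow> 'w \<Rightarrow> real^'m"
    and x xh :: "int \<Rightarrow> 'w \<Rightarrow> real^'n"
    and w :: "int \<Rightarrow> 'w \<Rightarrow> real^'m"
  defines "S \<equiv> S_of B D \<Psi> K M q Q"
    and "L \<equiv> L_of A B C D \<Phi> \<Psi> K M q Q"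
    and "y \<equiv> (\<lambda>k \<omega>. C *v x k \<omega> + D *v w k \<omega>)"
    and "z \<equiv> (\<lambda>k \<omega>. \<Phi> *v x k \<omega> + \<Psi> *v w k \<omega>)"
    and "zh \<equiv> (\<lambda>k \<omega>. (\<Phi> - M ** C) *v xh k \<omega> + M *v (C *v x k \<omega> + D *v w k \<omega>))"
    and "xt \<equiv> (\<lambda>k \<omega>. x k \<omega> - xh k \<omega>)"
  assumes stabA: "spec_rad A < 1"
    and rankD: "rank D = CARD('p)"
    and K: "K \<in> Kset A C"
    and q_nonneg: "0 \<le> q"
    and q_lt: "ereal q < theta A B C D \<Phi> \<Psi> K M"
    and Q: "admissible_DARE1 A B C D \<Phi> \<Psi> K M q Q"
    \<comment> \<open>V: Gaussian white noise with identity covariance (i.i.d. standard normal components)\<close>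
    and P: "prob_space Pr"
    and v_indep: "prob_space.indep_vars Pr (\<lambda>_. borel) (\<lambda>(k, i) \<omega>. v k \<omega> $ i) UNIV"
    and v_normal: "\<And>k i. distributed Pr lborel (\<lambda>\<omega>. v k \<omega> $ i) std_normal_density"
    \<comment> \<open>plant and estimator E_{K,M}\<close>
    and x_meas: "\<And>k. x k \<in> borel_measurable Pr"
    and xh_meas: "\<And>k. xh k \<in> borel_measurable Pr"
    and plant: "\<And>k \<omega>. x (k + 1) \<omega> = A *v x k \<omega> + B *v w k \<omega>"
    and estim: "\<And>k \<omega>. xh (k + 1) \<omega> = (A - K ** C) *v xh k \<omega> + K *v y k \<omega>"
    \<comment> \<open>noise generation W = G_{K,S,L} V, with state xt\<close>
    and w_gen: "\<And>k \<omega>. w k \<omega> = L *v xt k \<omega> + msqrt S *v v k \<omega>"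
    \<comment> \<open>G_{K,S,L} is in its stationary regime (causal, wide-sense stationary state)\<close>
    and xt_L2: "\<And>k. integrable Pr (\<lambda>\<omega>. (norm (xt k \<omega>))\<^sup>2)"
    and xt_mean: "\<And>k. integral\<^sup>L Pr (xt k) = integral\<^sup>L Pr (xt 0)"
    and xt_cov: "\<And>k. cov_mat Pr (xt k) = cov_mat Pr (xt 0)"
    and causal: "\<And>k. prob_space.indep_var Pr borel (\<lambda>\<omega>. (xt k \<omega>, 0 :: real^'m))
                                  borel (\<lambda>\<omega>. (0 :: real^'n, v k \<omega>))"
  shows "inner_sys (A - K ** C) (B - K ** D)
           ((\<chi> i. case i of Inl j \<Rightarrow> sqrt q *\<^sub>R ((\<Phi> - M ** C) $ j)
                          | Inr j \<Rightarrow> - ((msqrt_inv S ** L) $ j)) :: real^'n^('r + 'm))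
           ((\<chi> i. case i of Inl j \<Rightarrow> sqrt q *\<^sub>R ((\<Psi> - M ** D) $ j)
                          | Inr j \<Rightarrow> msqrt_inv S $ j) :: real^'m^('r + 'm))
    \<and> q * integral\<^sup>L Pr (\<lambda>\<omega>. (norm (z 0 \<omega> - zh 0 \<omega>))\<^sup>2) + real CARD('m)
        = integral\<^sup>L Pr (\<lambda>\<omega>. (norm (w 0 \<omega>))\<^sup>2)
    \<and> integral\<^sup>L Pr (\<lambda>\<omega>. (norm (w 0 \<omega>))\<^sup>2)
        = trace (L ** cov_mat Pr (xt 0) ** transpose L + S)"
proof -
  interpret prob_space Pr by (rule P)
  define \<alpha> where "\<alpha> = A - K ** C"
  define \<beta> where "\<beta> = B - K ** D"
  define \<Phi>c where "\<Phi>c = \<Phi> - M ** C"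
  define \<Psi>c where "\<Psi>c = \<Psi> - M ** D"
  define N where "N = Sinv_of B D \<Psi> K M q Q"
  define H where "H = transpose \<beta> ** Q ** \<alpha> + q *\<^sub>R (transpose \<Psi>c ** \<Phi>c)"
  have Ndef: "N = mat 1 - transpose \<beta> ** Q ** \<beta> - q *\<^sub>R (transpose \<Psi>c ** \<Psi>c)"
    unfolding N_def Sinv_of_def \<beta>_def \<Psi>c_def ..
  have Sdef: "S = matrix_inv N" unfolding S_def S_of_def N_def ..
  have Ldef: "L = S ** H" unfolding L_def L_of_def H_def S_def \<alpha>_def \<beta>_def \<Phi>c_def \<Psi>c_def ..
  have invN: "invertible N"
    and DARE: "Q = transpose \<alpha> ** Q ** \<alpha> + q *\<^sub>R (transpose \<Phi>c ** \<Phi>c) + transpose L ** N ** L"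
    and psdQ: "psd Q" and pdS: "pd S" and LL: "L \<in> Lset A B C D K"
    using Q unfolding admissible_DARE1_def Let_def
    by (simp_all add: S_def[symmetric] L_def[symmetric] N_def[symmetric] \<alpha>_def \<Phi>c_def)
  have Qs: "transpose Q = Q" using psdQ by (rule psd_sym)
  have sr\<alpha>: "spec_rad \<alpha> < 1" using K unfolding Kset_def \<alpha>_def by simp
  have srL: "spec_rad (\<alpha> + \<beta> ** L) < 1" using LL unfolding Lset_def \<alpha>_def \<beta>_def by simp
  have pdS': "pd (matrix_inv N)" using pdS Sdef by simp
  have part1: "inner_sys (A - K ** C) (B - K ** D)
           ((\<chi> i. case i of Inl j \<Rightarrow> sqrt q *\<^sub>R ((\<Phi> - M ** C) $ j)
                          | Inr j \<Rightarrow> - ((msqrt_inv S ** L) $ j)) :: real^'n^('r + 'm))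
           ((\<chi> i. case i of Inl j \<Rightarrow> sqrt q *\<^sub>R ((\<Psi> - M ** D) $ j)
                          | Inr j \<Rightarrow> msqrt_inv S $ j) :: real^'m^('r + 'm))"
    using inner_concrete[where \<alpha>=\<alpha> and Q=Q and \<beta>=\<beta> and \<Phi>c=\<Phi>c and \<Psi>c=\<Psi>c and L=L and q=q, folded Ndef, folded Sdef, OF invN pdS Qs q_nonneg DARE Ldef[unfolded H_def] sr\<alpha>]
    unfolding \<alpha>_def \<beta>_def \<Phi>c_def \<Psi>c_def .
  define Sh where "Sh = msqrt S"
  define Shi where "Shi = msqrt_inv S"
  note sf = sqrt_facts[OF pdS, folded Sh_def Shi_def]
  have ShiN: "transpose Shi ** Shi = N" using ShiN_lemma[OF invN pdS'] unfolding Shi_def Sdef .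
  have "transpose (transpose Shi ** Shi) = transpose Shi ** Shi" by (simp add: matrix_transpose_mul)
  hence Ns: "transpose N = N" unfolding ShiN .
  have NS: "N ** S = mat 1" using matrix_inv_props[OF invN] Sdef by simp
  have Z3: "N ** L = H" unfolding Ldef by (simp add: matrix_mul_assoc NS)
  have xt_rec: "xt (k + 1) \<omega> = \<alpha> *v xt k \<omega> + \<beta> *v w k \<omega>" for k \<omega>
    unfolding xt_def plant estim y_def \<alpha>_def \<beta>_def
    by (simp add: matrix_vector_mult_diff_rdistrib matrix_vector_right_distrib matrix_vector_mul_assoc algebra_simps)
  have w_eq: "w k \<omega> = L *v xt k \<omega> + Sh *v v k \<omega>" for k \<omega> using w_gen unfolding Sh_def .
  have xt1: "xt 1 \<omega> = (\<alpha> + \<beta> ** L) *v xt 0 \<omega> + (\<beta> ** Sh) *v v 0 \<omega>" for \<omega>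
    using xt_rec[of 0 \<omega>] unfolding w_eq
    by (simp add: matrix_vector_mult_add_rdistrib matrix_vector_right_distrib matrix_vector_mul_assoc algebra_simps)
  have zt: "z 0 \<omega> - zh 0 \<omega> = \<Phi>c *v xt 0 \<omega> + \<Psi>c *v w 0 \<omega>" for \<omega>
    unfolding z_def zh_def xt_def \<Phi>c_def \<Psi>c_def
    by (simp add: matrix_vector_mult_diff_rdistrib matrix_vector_right_distrib matrix_vector_mul_assoc algebra_simps)
  have vrec: "Shi *v (w 0 \<omega> - L *v xt 0 \<omega>) = v 0 \<omega>" for \<omega>
    unfolding w_eq using sf(4) by (simp add: matrix_vector_mul_assoc)
  have xt_meas: "xt k \<in> borel_measurable Pr" for k
    unfolding xt_def using x_meas xh_meas by (rule borel_measurable_diff)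
  have Lx: "L2v (xt k)" for k by (rule L2v_of_norm[OF xt_meas xt_L2])
  have vfacts: "L2 (\<lambda>\<omega>. v k \<omega> $ i)" "integral\<^sup>L Pr (\<lambda>\<omega>. v k \<omega> $ i) = 0"
      "integral\<^sup>L Pr (\<lambda>\<omega>. v k \<omega> $ i * v k \<omega> $ i) = 1" for k i
    using stdnormal_facts[OF v_normal[of k i]] by auto
  have Lv: "L2v (v k)" for k unfolding L2v_def using vfacts(1) by auto
  have wfun: "w 0 = (\<lambda>\<omega>. L *v xt 0 \<omega> + Sh *v v 0 \<omega>)" using w_eq by auto
  have Lw: "L2v (w 0)" unfolding wfun by (intro L2v_add L2v_mv Lx Lv)
  have ztfun: "(\<lambda>\<omega>. z 0 \<omega> - zh 0 \<omega>) = (\<lambda>\<omega>. \<Phi>c *v xt 0 \<omega> + \<Psi>c *v w 0 \<omega>)" using zt by auto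
  have Lz: "L2v (\<lambda>\<omega>. z 0 \<omega> - zh 0 \<omega>)" unfolding ztfun by (intro L2v_add L2v_mv Lx Lw)
  have Evv: "integral\<^sup>L Pr (\<lambda>\<omega>. v 0 \<omega> $ b * v 0 \<omega> $ c) = (if b = c then 1 else 0)" for b c
  proof (cases "b = c")
    case True thus ?thesis using vfacts(3) by simp
  next
    case False
    have "integral\<^sup>L Pr (\<lambda>\<omega>. (\<lambda>(k, i) \<omega>. v k \<omega> $ i) (0, b) \<omega> * (\<lambda>(k, i) \<omega>. v k \<omega> $ i) (0, c) \<omega>) =
        integral\<^sup>L Pr ((\<lambda>(k, i) \<omega>. v k \<omega> $ i) (0, b)) * integral\<^sup>L Pr ((\<lambda>(k, i) \<omega>. v k \<omega> $ i) (0, c))"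
      by (rule indep_family_pair[OF v_indep]) (use False vfacts(1) in auto)
    thus ?thesis using False vfacts(2) by simp
  qed
  have Exv: "integral\<^sup>L Pr (\<lambda>\<omega>. xt 0 \<omega> $ a * v 0 \<omega> $ b) = 0" for a b
  proof -
    have m1: "(\<lambda>p. fst p $ a) \<in> borel_measurable (borel :: ((real^'n) \<times> (real^'m)) measure)"
      by (intro borel_measurable_continuous_onI continuous_intros)
    have m2: "(\<lambda>p. snd p $ b) \<in> borel_measurable (borel :: ((real^'n) \<times> (real^'m)) measure)"
      by (intro borel_measurable_continuous_onI continuous_intros)
    have "indep_var borel ((\<lambda>p. fst p $ a) \<circ> (\<lambda>\<omega>. (xt 0 \<omega>, 0::real^'m)))
        borel ((\<lambda>p. snd p $ b) \<circ> (\<lambda>\<omega>. (0::real^'n, v 0 \<omega>)))"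
      by (rule indep_var_compose[OF causal[of 0] m1 m2])
    hence ind: "indep_var borel (\<lambda>\<omega>. xt 0 \<omega> $ a) borel (\<lambda>\<omega>. v 0 \<omega> $ b)" by (simp add: o_def)
    have i1: "integrable Pr (\<lambda>\<omega>. xt 0 \<omega> $ a)" using Lx[of 0] unfolding L2v_def by (auto intro: L2_integrable)
    have i2: "integrable Pr (\<lambda>\<omega>. v 0 \<omega> $ b)" using vfacts(1) by (rule L2_integrable)
    show ?thesis using indep_var_lebesgue_integral[OF ind i1 i2] vfacts(2) by simp
  qed
  have comp: "integral\<^sup>L Pr (\<lambda>\<omega>. xt k \<omega> $ j) = integral\<^sup>L Pr (xt k) $ j" for k j
  proof -
    have "integrable Pr (xt k)"
    proof (rule Bochner_Integration.integrable_bound)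
      show "integrable Pr (\<lambda>\<omega>. 1 + (norm (xt k \<omega>))\<^sup>2)" using xt_L2[of k] by simp
      show "xt k \<in> borel_measurable Pr" by (rule xt_meas)
      show "AE \<omega> in Pr. norm (xt k \<omega>) \<le> norm (1 + (norm (xt k \<omega>))\<^sup>2)"
      proof (rule AE_I2)
        fix \<omega>
        have "0 \<le> (norm (xt k \<omega>) - 1)\<^sup>2" by simp
        hence "2 * norm (xt k \<omega>) \<le> (norm (xt k \<omega>))\<^sup>2 + 1" by (simp add: power2_eq_square algebra_simps)
        moreover have "0 \<le> (norm (xt k \<omega>))\<^sup>2" by simp
        ultimately have "norm (xt k \<omega>) \<le> 1 + (norm (xt k \<omega>))\<^sup>2" by linarith
        thus "norm (xt k \<omega>) \<le> norm (1 + (norm (xt k \<omega>))\<^sup>2)" by simp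
      qed
    qed
    from integral_bounded_linear[OF bounded_linear_vec_nth this] show ?thesis .
  qed
  have mean0: "meanv (xt 0) = 0"
  proof -
    have e1: "meanv (xt 1) = meanv (xt 0)" unfolding meanv_def using comp xt_mean[of 1] by simp
    have xt1f: "xt 1 = (\<lambda>\<omega>. (\<alpha> + \<beta> ** L) *v xt 0 \<omega> + (\<beta> ** Sh) *v v 0 \<omega>)" using xt1 by auto
    have mv0: "meanv (v 0) = 0" unfolding meanv_def using vfacts(2) by (simp add: vec_eq_iff)
    have "meanv (xt 1) = (\<alpha> + \<beta> ** L) *v meanv (xt 0)"
      unfolding xt1f by (simp add: meanv_add L2v_mv Lx Lv meanv_mv mv0)
    with e1 have "(\<alpha> + \<beta> ** L) *v meanv (xt 0) = meanv (xt 0)" by simp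
    thus ?thesis by (rule fixed_zero[OF srL])
  qed
  have mean1: "meanv (xt 1) = 0" using comp xt_mean[of 1] mean0 unfolding meanv_def by (simp add: vec_eq_iff)
  have mom: "integral\<^sup>L Pr (\<lambda>\<omega>. xt 1 \<omega> $ a * xt 1 \<omega> $ b) = integral\<^sup>L Pr (\<lambda>\<omega>. xt 0 \<omega> $ a * xt 0 \<omega> $ b)" for a b
    using cov_second_moment[OF Lx[of 1]] cov_second_moment[OF Lx[of 0]] xt_cov[of 1] mean0 mean1 by simp
  have mom0: "integral\<^sup>L Pr (\<lambda>\<omega>. xt 0 \<omega> $ a * xt 0 \<omega> $ b) = cov_mat Pr (xt 0) $ a $ b" for a b
    using cov_second_moment[OF Lx[of 0]] mean0 by simp
  define P where "P = cov_mat Pr (xt 0)"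
  have Shs: "Sh $ a $ b = Sh $ b $ a" for a b
  proof -
    have "transpose Sh $ a $ b = Sh $ a $ b" using sf(1) by simp
    thus ?thesis by (simp add: transpose_def)
  qed
  have Ewi: "integral\<^sup>L Pr (\<lambda>\<omega>. w 0 \<omega> $ i * w 0 \<omega> $ i) = (L ** P ** transpose L) $ i $ i + S $ i $ i" for i
  proof -
    let ?lx = "\<lambda>\<omega>. (L *v xt 0 \<omega>) $ i" and ?sv = "\<lambda>\<omega>. (Sh *v v 0 \<omega>) $ i"
    have eqf: "(\<lambda>\<omega>. w 0 \<omega> $ i * w 0 \<omega> $ i) = (\<lambda>\<omega>. (?lx \<omega> * ?lx \<omega> + ?lx \<omega> * ?sv \<omega>) + (?sv \<omega> * ?lx \<omega> + ?sv \<omega> * ?sv \<omega>))"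
      unfolding wfun by (rule ext) (simp add: algebra_simps)
    have i1: "integrable Pr (\<lambda>\<omega>. ?lx \<omega> * ?lx \<omega>)" by (rule L2v_mv_integrable[OF Lx Lx])
    have i2: "integrable Pr (\<lambda>\<omega>. ?lx \<omega> * ?sv \<omega>)" by (rule L2v_mv_integrable[OF Lx Lv])
    have i3: "integrable Pr (\<lambda>\<omega>. ?sv \<omega> * ?lx \<omega>)" by (rule L2v_mv_integrable[OF Lv Lx])
    have i4: "integrable Pr (\<lambda>\<omega>. ?sv \<omega> * ?sv \<omega>)" by (rule L2v_mv_integrable[OF Lv Lv])
    have "integral\<^sup>L Pr (\<lambda>\<omega>. w 0 \<omega> $ i * w 0 \<omega> $ i) =
        integral\<^sup>L Pr (\<lambda>\<omega>. ?lx \<omega> * ?lx \<omega>) + integral\<^sup>L Pr (\<lambda>\<omega>. ?lx \<omega> * ?sv \<omega>)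
        + (integral\<^sup>L Pr (\<lambda>\<omega>. ?sv \<omega> * ?lx \<omega>) + integral\<^sup>L Pr (\<lambda>\<omega>. ?sv \<omega> * ?sv \<omega>))"
      unfolding eqf
      by (simp only: Bochner_Integration.integral_add[OF Bochner_Integration.integrable_add[OF i1 i2]
          Bochner_Integration.integrable_add[OF i3 i4]] Bochner_Integration.integral_add[OF i1 i2]
          Bochner_Integration.integral_add[OF i3 i4])
    also have "integral\<^sup>L Pr (\<lambda>\<omega>. ?lx \<omega> * ?sv \<omega>) = 0"
      using E_mv_mv[OF Lx[of 0] Lv[of 0], of L i Sh i] Exv by simp
    also have "integral\<^sup>L Pr (\<lambda>\<omega>. ?sv \<omega> * ?lx \<omega>) = 0"
      using E_mv_mv[OF Lv[of 0] Lx[of 0], of Sh i L i] Exv by (simp add: mult.commute)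
    also have "integral\<^sup>L Pr (\<lambda>\<omega>. ?sv \<omega> * ?sv \<omega>) = S $ i $ i"
    proof -
      have "integral\<^sup>L Pr (\<lambda>\<omega>. ?sv \<omega> * ?sv \<omega>) = (\<Sum>a\<in>UNIV. Sh $ i $ a * Sh $ i $ a)"
        using E_mv_mv[OF Lv[of 0] Lv[of 0], of Sh i Sh i] Evv by (simp add: if_distrib cong: if_cong)
      also have "\<dots> = (Sh ** Sh) $ i $ i" by (simp add: matrix_matrix_mult_def Shs[of _ i])
      finally show ?thesis using sf(2) by simp
    qed
    also have "integral\<^sup>L Pr (\<lambda>\<omega>. ?lx \<omega> * ?lx \<omega>) = (L ** P ** transpose L) $ i $ i"
    proof -
      have "integral\<^sup>L Pr (\<lambda>\<omega>. ?lx \<omega> * ?lx \<omega>) = (\<Sum>a\<in>UNIV. \<Sum>b\<in>UNIV. L $ i $ a * L $ i $ b * P $ a $ b)"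
        using E_mv_mv[OF Lx[of 0] Lx[of 0], of L i L i] mom0 unfolding P_def by simp
      also have "\<dots> = (\<Sum>b\<in>UNIV. \<Sum>a\<in>UNIV. L $ i $ a * L $ i $ b * P $ a $ b)" by (rule sum.swap)
      also have "\<dots> = (L ** P ** transpose L) $ i $ i"
        by (simp add: matrix_matrix_mult_def transpose_def sum_distrib_right sum_distrib_left mult_ac)
      finally show ?thesis .
    qed
    finally show ?thesis by simp
  qed
  have part3: "integral\<^sup>L Pr (\<lambda>\<omega>. (norm (w 0 \<omega>))\<^sup>2) = trace (L ** cov_mat Pr (xt 0) ** transpose L + S)"
    unfolding L2v_norm2(2)[OF Lw] Ewi P_def[symmetric] by (simp add: trace_def sum.distrib)
  have pw: "q * (norm (z 0 \<omega> - zh 0 \<omega>))\<^sup>2 + (norm (v 0 \<omega>))\<^sup>2 + xt 1 \<omega> \<bullet> (Q *v xt 1 \<omega>)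
      = xt 0 \<omega> \<bullet> (Q *v xt 0 \<omega>) + (norm (w 0 \<omega>))\<^sup>2" for \<omega>
    using lossless[OF Qs Ns ShiN DARE Ndef Z3[unfolded H_def], of "xt 0 \<omega>" "w 0 \<omega>"]
    unfolding zt[symmetric] vrec xt_rec[of 0 \<omega>, simplified, symmetric] .
  have iz: "integrable Pr (\<lambda>\<omega>. (norm (z 0 \<omega> - zh 0 \<omega>))\<^sup>2)" by (rule L2v_norm2(1)[OF Lz])
  have iv: "integrable Pr (\<lambda>\<omega>. (norm (v 0 \<omega>))\<^sup>2)" by (rule L2v_norm2(1)[OF Lv])
  have iw: "integrable Pr (\<lambda>\<omega>. (norm (w 0 \<omega>))\<^sup>2)" by (rule L2v_norm2(1)[OF Lw])
  have iq1: "integrable Pr (\<lambda>\<omega>. xt 1 \<omega> \<bullet> (Q *v xt 1 \<omega>))" by (rule L2v_quad(1)[OF Lx])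
  have iq0: "integrable Pr (\<lambda>\<omega>. xt 0 \<omega> \<bullet> (Q *v xt 0 \<omega>))" by (rule L2v_quad(1)[OF Lx])
  have "integral\<^sup>L Pr (\<lambda>\<omega>. q * (norm (z 0 \<omega> - zh 0 \<omega>))\<^sup>2 + (norm (v 0 \<omega>))\<^sup>2 + xt 1 \<omega> \<bullet> (Q *v xt 1 \<omega>))
      = integral\<^sup>L Pr (\<lambda>\<omega>. xt 0 \<omega> \<bullet> (Q *v xt 0 \<omega>) + (norm (w 0 \<omega>))\<^sup>2)"
    using pw by simp
  hence "q * integral\<^sup>L Pr (\<lambda>\<omega>. (norm (z 0 \<omega> - zh 0 \<omega>))\<^sup>2) + integral\<^sup>L Pr (\<lambda>\<omega>. (norm (v 0 \<omega>))\<^sup>2)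
      + integral\<^sup>L Pr (\<lambda>\<omega>. xt 1 \<omega> \<bullet> (Q *v xt 1 \<omega>))
      = integral\<^sup>L Pr (\<lambda>\<omega>. xt 0 \<omega> \<bullet> (Q *v xt 0 \<omega>)) + integral\<^sup>L Pr (\<lambda>\<omega>. (norm (w 0 \<omega>))\<^sup>2)"
    using iz iv iw iq1 iq0 by simp
  moreover have "integral\<^sup>L Pr (\<lambda>\<omega>. xt 1 \<omega> \<bullet> (Q *v xt 1 \<omega>)) = integral\<^sup>L Pr (\<lambda>\<omega>. xt 0 \<omega> \<bullet> (Q *v xt 0 \<omega>))"
    unfolding L2v_quad(2)[OF Lx] mom ..
  moreover have "integral\<^sup>L Pr (\<lambda>\<omega>. (norm (v 0 \<omega>))\<^sup>2) = real CARD('m)"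
    unfolding L2v_norm2(2)[OF Lv] using Evv by simp
  ultimately have part2: "q * integral\<^sup>L Pr (\<lambda>\<omega>. (norm (z 0 \<omega> - zh 0 \<omega>))\<^sup>2) + real CARD('m)
        = integral\<^sup>L Pr (\<lambda>\<omega>. (norm (w 0 \<omega>))\<^sup>2)" by linarith
  show ?thesis using part1 part2 part3 by blast
qed

end
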